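(* Let $d\le N$ be positive integers and let $X, X'\in \mathbb{Z}^{d\times N}$ be matrices of rank $d$ that represent the same arithmetic matroid $\mathcal{A}=(E,\operatorname{rk},m)$ on $E=[N]$, and suppose that $\mathcal{A}$ is weakly multiplicative. Then there exist a matrix $T\in \mathrm{GL}(d,\mathbb{Z})$ and a diagonal matrix $D\in\mathbb{Z}^{N\times N}$ with diagonal entries in $\{1,-1\}$ such that $X' = T X D$.
   Context: For $X\in\mathbb{Z}^{d\times N}$ with columns $x_1,\dots,x_N$, the arithmetic matroid $\mathcal{A}(X)=([N],\operatorname{rk},m)$ represented by $X$ consists of the rank function $\operatorname{rk}(S)=\dim \langle x_e : e\in S\rangle_{\mathbb{R}}$ and the multiplicity function $m(S)=\bigl|(\langle S\rangle_{\mathbb{R}}\cap\mathbb{Z}^d)/\langle S\rangle\bigr|$ for $S\subseteq[N]$, where $\langle S\rangle\subseteq\mathbb{Z}^d$ is the subgroup generated by $\{x_e: e\in S\}$ and $\langle S\rangle_{\mathbb{R}}$ is the real span of the same vectors. Two matrices represent the same arithmetic matroid if their rank functions and multiplicity functions on subsets of $[N]$ coincide. A basis of $\mathcal{A}$ is a basis of the underlying matroid $([N],\operatorname{rk})$. The arithmetic matroid is torsion-free if $m(\emptyset)=1$ (automatic here). A basis $B$ is multiplicative if $m(B)=\prod_{x\in B} m(\{x\})$; a torsion-free arithmetic matroid is weakly multiplicative if it has at least one multiplicative basis. *)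

theory Defs
  imports "HOL-Analysis.Analysis"
begin

text \<open>Integer matrices X :: int^'n^'d with d = CARD('d) rows and N = CARD('n) columns;
  the ground set E = [N] is the index type 'n, subsets S :: 'n set.\<close>

definition real_col :: "int^'n^'d \<Rightarrow> 'n \<Rightarrow> real^'d" where
  "real_col X e = (\<chi> i. real_of_int (X $ i $ e))"

definition am_rank :: "int^'n^'d \<Rightarrow> 'n set \<Rightarrow> nat" where
  "am_rank X S = dim (span (real_col X ` S))"

definition int_span_cols :: "int^'n^'d \<Rightarrow> 'n set \<Rightarrow> (int^'d) set" where
  "int_span_cols X S = {v. \<exists>c :: 'n \<Rightarrow> int. v = (\<Sum>e\<in>S. c e *s column e X)}"

definition saturation :: "int^'n^'d \<Rightarrow> 'n set \<Rightarrow> (int^'d) set" where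
  "saturation X S = {v :: int^'d. (\<chi> i. real_of_int (v $ i)) \<in> span (real_col X ` S)}"

definition am_mult :: "int^'n^'d \<Rightarrow> 'n set \<Rightarrow> nat" where
  "am_mult X S = card (saturation X S //
      {(v, w). v \<in> saturation X S \<and> w \<in> saturation X S \<and> v - w \<in> int_span_cols X S})"

definition same_arith_matroid :: "int^'n^'d \<Rightarrow> int^'n^'d \<Rightarrow> bool" where
  "same_arith_matroid X X' \<longleftrightarrow>
     (\<forall>S. am_rank X S = am_rank X' S \<and> am_mult X S = am_mult X' S)"

definition am_basis :: "int^'n^'d \<Rightarrow> 'n set \<Rightarrow> bool" where
  "am_basis X B \<longleftrightarrow> am_rank X B = card B \<and> am_rank X B = am_rank X UNIV"

definition multiplicative_basis :: "int^'n^'d \<Rightarrow> 'n set \<Rightarrow> bool" where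
  "multiplicative_basis X B \<longleftrightarrow> am_basis X B \<and> am_mult X B = (\<Prod>x\<in>B. am_mult X {x})"

definition torsion_free :: "int^'n^'d \<Rightarrow> bool" where
  "torsion_free X \<longleftrightarrow> am_mult X {} = 1"

definition weakly_multiplicative :: "int^'n^'d \<Rightarrow> bool" where
  "weakly_multiplicative X \<longleftrightarrow> torsion_free X \<and> (\<exists>B. multiplicative_basis X B)"

end

theory Submission
  imports Defs
begin

definition lat :: "int^'d^'d \<Rightarrow> (int^'d) set" where
  "lat M = range (\<lambda>c. M *v c)"

definition ceq :: "int^'d^'d \<Rightarrow> int^'d^'d \<Rightarrow> bool" where
  "ceq M M' \<longleftrightarrow> lat M = lat M' \<and> \<bar>det M\<bar> = \<bar>det M'\<bar>"

definition addcol :: "int^'d^'d \<Rightarrow> 'd \<Rightarrow> 'd \<Rightarrow> int \<Rightarrow> int^'d^'d" where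
  "addcol M j1 j2 q = (\<chi> i j. if j = j2 then M$i$j2 + q * M$i$j1 else M$i$j)"

definition swapcol :: "int^'d^'d \<Rightarrow> 'd \<Rightarrow> 'd \<Rightarrow> int^'d^'d" where
  "swapcol M j1 j2 = (\<chi> i j. M$i$(Transposition.transpose j1 j2 j))"

lemma ceq_refl: "ceq M M" by (simp add: ceq_def)
lemma ceq_trans: "ceq M1 M2 \<Longrightarrow> ceq M2 M3 \<Longrightarrow> ceq M1 M3" by (simp add: ceq_def)

lemma det_addcol:
  assumes "j1 \<noteq> j2" shows "det (addcol M j1 j2 q) = det M"
proof -
  have "transpose (addcol M j1 j2 q) =
     (\<chi> k. if k = j2 then row j2 (transpose M) + q *s row j1 (transpose M) else row k (transpose M))"
    by (simp add: addcol_def transpose_def row_def vec_eq_iff)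
  then have "det (transpose (addcol M j1 j2 q)) = det (transpose M)"
    using det_row_operation[of j2 j1 "transpose M" q] assms by simp
  then show ?thesis by simp
qed

lemma lat_addcol:
  assumes "j1 \<noteq> j2" shows "lat (addcol M j1 j2 q) = lat M"
proof -
  have 1: "addcol M j1 j2 q *v c = M *v (\<chi> j. if j = j1 then c$j1 + q * c$j2 else c$j)" for c
  proof -
    have "(\<Sum>j\<in>UNIV. (if j = j2 then M$i$j2 + q * M$i$j1 else M$i$j) * c$j)
        = (\<Sum>j\<in>UNIV. M$i$j * (if j = j1 then c$j1 + q * c$j2 else c$j))" for i
    proof -
      have a: "(if j = j2 then M$i$j2 + q * M$i$j1 else M$i$j) * c$j = M$i$j * c$j + (if j = j2 then q * M$i$j1 * c$j2 else 0)" for j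
        by (simp add: algebra_simps)
      have b: "M$i$j * (if j = j1 then c$j1 + q * c$j2 else c$j) = M$i$j * c$j + (if j = j1 then q * M$i$j1 * c$j2 else 0)" for j
        by (simp add: algebra_simps)
      show ?thesis by (simp only: a b sum.distrib sum.delta finite UNIV_I if_True)
    qed
    then show ?thesis by (simp add: addcol_def matrix_vector_mult_def vec_eq_iff)
  qed
  have 2: "M *v c = addcol M j1 j2 q *v (\<chi> j. if j = j1 then c$j1 - q * c$j2 else c$j)" for c
  proof -
    have "(\<chi> j. if j = j1 then (\<chi> j. if j = j1 then c$j1 - q * c$j2 else c$j)$j1 + q * (\<chi> j. if j = j1 then c$j1 - q * c$j2 else c$j)$j2
       else (\<chi> j. if j = j1 then c$j1 - q * c$j2 else c$j)$j) = c"
      using assms by (simp add: vec_eq_iff)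
    then show ?thesis by (simp only: 1)
  qed
  show ?thesis unfolding lat_def
  proof (intro equalityI subsetI)
    fix x assume "x \<in> range ((*v) (addcol M j1 j2 q))"
    then obtain c where "x = addcol M j1 j2 q *v c" by auto
    then show "x \<in> range ((*v) M)" by (simp only: 1) auto
  next
    fix x assume "x \<in> range ((*v) M)"
    then obtain c where "x = M *v c" by auto
    then show "x \<in> range ((*v) (addcol M j1 j2 q))" by (simp only: 2) auto
  qed
qed

lemma ceq_addcol: "j1 \<noteq> j2 \<Longrightarrow> ceq M (addcol M j1 j2 q)"
  by (simp add: ceq_def det_addcol lat_addcol)

lemma ceq_swapcol: "ceq (M::int^'d^'d) (swapcol M j1 j2)"
proof -
  let ?t = "Transposition.transpose j1 j2"
  have p: "?t permutes UNIV" by (rule permutes_swap_id) auto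
  have d: "det (swapcol M j1 j2) = of_int (sign ?t) * det M"
    unfolding swapcol_def by (rule det_permute_columns[OF p])
  have s: "\<bar>sign ?t :: int\<bar> = 1" by (simp add: sign_def)
  have m: "swapcol M j1 j2 *v c = M *v (\<chi> j. c $ ?t j)" for c
  proof -
    have "(\<Sum>j\<in>UNIV. M$i$(?t j) * c$j) = (\<Sum>j\<in>UNIV. M$i$j * c$(?t j))" for i
      by (rule sum.reindex_bij_witness[where i="?t" and j="?t"]) auto
    then show ?thesis by (simp add: swapcol_def matrix_vector_mult_def vec_eq_iff)
  qed
  have inv: "(\<chi> j. (\<chi> j. c $ ?t j) $ ?t j) = c" for c :: "int^'d"
    by (simp add: vec_eq_iff)
  have "lat (swapcol M j1 j2) = lat M"
    unfolding lat_def
  proof (intro equalityI subsetI)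
    fix x assume "x \<in> range ((*v) (swapcol M j1 j2))"
    then obtain c where "x = swapcol M j1 j2 *v c" by auto
    then show "x \<in> range ((*v) M)" by (simp only: m) auto
  next
    fix x assume "x \<in> range ((*v) M)"
    then obtain c where "x = M *v c" by auto
    then have "x = swapcol M j1 j2 *v (\<chi> j. c $ ?t j)" by (simp only: m inv)
    then show "x \<in> range ((*v) (swapcol M j1 j2))" by auto
  qed
  then show ?thesis using d s by (simp add: ceq_def abs_mult)
qed

definition tri :: "('d \<Rightarrow> nat) \<Rightarrow> nat \<Rightarrow> int^'d^'d \<Rightarrow> bool" where
  "tri h k M \<longleftrightarrow> (\<forall>i j. h i < k \<longrightarrow> h i < h j \<longrightarrow> M$i$j = 0)"

lemma row_step:
  fixes M :: "int^'d^'d" and h :: "'d \<Rightarrow> nat"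
  assumes "tri h k M" "h i0 = k"
  shows "\<exists>M'. ceq M M' \<and> tri h k M' \<and> (\<forall>j. h j > k \<longrightarrow> M'$i0$j = 0)"
  using assms
proof (induction "\<Sum>j\<in>{j. h j \<ge> k}. nat \<bar>M$i0$j\<bar>" arbitrary: M rule: less_induct)
  case less
  show ?case
  proof (cases "\<exists>j1 j2. j1 \<noteq> j2 \<and> h j1 \<ge> k \<and> h j2 \<ge> k \<and> M$i0$j1 \<noteq> 0 \<and> M$i0$j2 \<noteq> 0")
    case True
    then obtain j1 j2 where jj: "j1 \<noteq> j2" "h j1 \<ge> k" "h j2 \<ge> k" "M$i0$j1 \<noteq> 0" "M$i0$j2 \<noteq> 0"
      and le: "\<bar>M$i0$j1\<bar> \<le> \<bar>M$i0$j2\<bar>"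
      by (metis linorder_le_cases)
    define a where "a = M$i0$j1"
    define b where "b = M$i0$j2"
    define q where "q = - (sgn a * sgn b)"
    define M' where "M' = addcol M j1 j2 q"
    have c1: "ceq M M'" unfolding M'_def by (rule ceq_addcol[OF jj(1)])
    have t1: "tri h k M'"
      using less.prems(1) jj unfolding tri_def M'_def addcol_def by auto
    have b': "M'$i0$j2 = b + q * a" by (simp add: M'_def addcol_def a_def b_def)
    have abs_b': "\<bar>b + q * a\<bar> = \<bar>b\<bar> - \<bar>a\<bar>"
      using le jj(4,5) unfolding q_def a_def[symmetric] b_def[symmetric]
      by (cases "a > 0"; cases "b > 0") (auto simp: sgn_if)
    have oth: "M'$i0$j = M$i0$j" if "j \<noteq> j2" for j
      using that by (simp add: M'_def addcol_def)
    let ?S = "{j. h j \<ge> k}"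
    have fin: "finite ?S" by simp
    have j2S: "j2 \<in> ?S" using jj by simp
    have "(\<Sum>j\<in>?S. nat \<bar>M'$i0$j\<bar>) = nat \<bar>M'$i0$j2\<bar> + (\<Sum>j\<in>?S-{j2}. nat \<bar>M'$i0$j\<bar>)"
      by (rule sum.remove[OF fin j2S])
    also have "(\<Sum>j\<in>?S-{j2}. nat \<bar>M'$i0$j\<bar>) = (\<Sum>j\<in>?S-{j2}. nat \<bar>M$i0$j\<bar>)"
      by (rule sum.cong) (auto simp: oth)
    also have "nat \<bar>M'$i0$j2\<bar> < nat \<bar>M$i0$j2\<bar>"
      using b' abs_b' jj(4) by (simp add: a_def b_def)
    finally have lt: "(\<Sum>j\<in>?S. nat \<bar>M'$i0$j\<bar>) < nat \<bar>M$i0$j2\<bar> + (\<Sum>j\<in>?S-{j2}. nat \<bar>M$i0$j\<bar>)"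
      by simp
    also have "\<dots> = (\<Sum>j\<in>?S. nat \<bar>M$i0$j\<bar>)"
      by (rule sum.remove[OF fin j2S, symmetric])
    finally obtain M'' where "ceq M' M''" "tri h k M''" "\<forall>j. h j > k \<longrightarrow> M''$i0$j = 0"
      using less.hyps[OF _ t1 less.prems(2)] by blast
    then show ?thesis using c1 ceq_trans by blast
  next
    case False
    show ?thesis
    proof (cases "\<exists>j1. h j1 \<ge> k \<and> M$i0$j1 \<noteq> 0")
      case True
      then obtain j1 where j1: "h j1 \<ge> k" "M$i0$j1 \<noteq> 0" by blast
      have z: "M$i0$j = 0" if "h j \<ge> k" "j \<noteq> j1" for j using False j1 that by blast
      define M' where "M' = swapcol M i0 j1"
      have c1: "ceq M M'" unfolding M'_def by (rule ceq_swapcol)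
      have t1: "tri h k M'"
        unfolding tri_def
      proof (intro allI impI)
        fix i j assume "h i < k" "h i < h j"
        then show "M'$i$j = 0"
          using less.prems j1 unfolding tri_def M'_def swapcol_def
          by (cases "j = i0"; cases "j = j1") auto
      qed
      have "M'$i0$j = 0" if "h j > k" for j
      proof -
        have "j \<noteq> i0" using that less.prems(2) by auto
        then show ?thesis
          using that z less.prems(2) unfolding M'_def swapcol_def
          by (cases "j = j1") (auto simp: transpose_def)
      qed
      then show ?thesis using c1 t1 by blast
    next
      case False
      then have "\<forall>j. h j > k \<longrightarrow> M$i0$j = 0" by auto
      then show ?thesis using less.prems ceq_refl by blast
    qed
  qed
qed

lemma tri_exists:
  fixes M :: "int^'d^'d" and h :: "'d \<Rightarrow> nat"
  assumes "inj h"
  shows "\<exists>M'. ceq M M' \<and> tri h k M'"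
proof (induction k)
  case 0
  show ?case using ceq_refl by (auto simp: tri_def)
next
  case (Suc k)
  then obtain M1 where m1: "ceq M M1" "tri h k M1" by blast
  show ?case
  proof (cases "\<exists>i0. h i0 = k")
    case True
    then obtain i0 where i0: "h i0 = k" by blast
    obtain M2 where m2: "ceq M1 M2" "tri h k M2" "\<forall>j. h j > k \<longrightarrow> M2$i0$j = 0"
      using row_step[OF m1(2) i0] by blast
    have "tri h (Suc k) M2"
      unfolding tri_def
    proof (intro allI impI)
      fix i j assume a: "h i < Suc k" "h i < h j"
      show "M2$i$j = 0"
      proof (cases "h i < k")
        case True then show ?thesis using m2(2) a unfolding tri_def by blast
      next
        case False
        then have "h i = k" using a by simp
        then have "i = i0" using i0 assms by (metis injD)
        then show ?thesis using m2(3) a \<open>h i = k\<close> by simp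
      qed
    qed
    then show ?thesis using m1 m2 ceq_trans by blast
  next
    case False
    have "tri h (Suc k) M1"
      unfolding tri_def
    proof (intro allI impI)
      fix i j assume a: "h i < Suc k" "h i < h j"
      then have "h i < k" using False by (metis less_Suc_eq)
      then show "M1$i$j = 0" using m1(2) a unfolding tri_def by blast
    qed
    then show ?thesis using m1 by blast
  qed
qed

lemma lower_exists:
  fixes M :: "int^'d^'d" and h :: "'d \<Rightarrow> nat"
  assumes "inj h"
  shows "\<exists>M'. ceq M M' \<and> (\<forall>i j. h i < h j \<longrightarrow> M'$i$j = 0)"
proof -
  define k where "k = Suc (Max (range h))"
  have "h i < k" for i unfolding k_def by (simp add: le_imp_less_Suc)
  then show ?thesis using tri_exists[OF assms, of M k] unfolding tri_def by blast
qed

lemma sum_single: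
  assumes "finite A" "a \<in> A" "\<And>x. x \<in> A \<Longrightarrow> x \<noteq> a \<Longrightarrow> f x = 0"
  shows "sum f A = f a"
proof -
  have "sum f A = f a + sum f (A - {a})" by (rule sum.remove[OF assms(1,2)])
  also have "sum f (A - {a}) = 0" using assms(3) by (intro sum.neutral) auto
  finally show ?thesis by simp
qed

lemma det_lower:
  fixes M :: "int^'d^'d" and h :: "'d \<Rightarrow> nat"
  assumes "inj h" and low: "\<forall>i j. h i < h j \<longrightarrow> M$i$j = 0"
  shows "det M = (\<Prod>i\<in>UNIV. M$i$i)"
proof -
  let ?P = "{p. p permutes (UNIV::'d set)}"
  let ?f = "\<lambda>p. of_int (sign p) * (\<Prod>i\<in>UNIV. M$i$p i) :: int"
  have z: "?f p = 0" if p: "p \<in> ?P - {id}" for p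
  proof -
    have pp: "p permutes UNIV" "p \<noteq> id" using p by auto
    have "\<exists>i. h i < h (p i)"
    proof (rule ccontr)
      assume "\<not> ?thesis"
      then have le: "\<forall>i\<in>UNIV. h (p i) \<le> h i" by (simp add: not_less)
      have "sum h UNIV = sum (h \<circ> p) UNIV" by (rule sum.permute[OF pp(1)])
      moreover have "\<forall>i. h (p i) = h i"
      proof (rule ccontr)
        assume "\<not> (\<forall>i. h (p i) = h i)"
        then have "\<exists>i\<in>UNIV. h (p i) < h i" using le by (meson le_neq_implies_less UNIV_I)
        then have "sum (h \<circ> p) UNIV < sum h UNIV"
          using le by (intro sum_strict_mono_ex1) auto
        then show False using \<open>sum h UNIV = sum (h \<circ> p) UNIV\<close> by simp
      qed
      then have "p = id" using assms(1) by (auto simp: inj_def)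
      then show False using pp by simp
    qed
    then obtain i where "h i < h (p i)" by blast
    then have "M$i$p i = 0" using low by blast
    then show ?thesis by (auto simp: prod_zero_iff)
  qed
  have idP: "id \<in> ?P" by (simp add: permutes_id)
  have "det M = ?f id + sum ?f (?P - {id})"
    unfolding det_def by (rule sum.remove[OF _ idP]) (simp add: finite_permutations)
  also have "sum ?f (?P - {id}) = 0" using z by (intro sum.neutral) auto
  finally show ?thesis by simp
qed

definition latrel :: "int^'d^'d \<Rightarrow> ((int^'d) \<times> (int^'d)) set" where
  "latrel M = {(v,w). v - w \<in> lat M}"

lemma lat_0: "0 \<in> lat M"
proof -
  have "M *v 0 = 0" by (simp add: vec_eq_iff matrix_vector_mult_def)
  then show ?thesis unfolding lat_def by (metis rangeI)
qed
lemma lat_add: "x \<in> lat M \<Longrightarrow> y \<in> lat M \<Longrightarrow> x + y \<in> lat M"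
proof -
  assume "x \<in> lat M" "y \<in> lat M"
  then obtain a b where "x = M *v a" "y = M *v b" unfolding lat_def by auto
  then have "x + y = M *v (a + b)"
    by (simp add: vec_eq_iff matrix_vector_mult_def distrib_left sum.distrib)
  then show ?thesis unfolding lat_def by (metis rangeI)
qed
lemma lat_neg: "x \<in> lat M \<Longrightarrow> - x \<in> lat M"
proof -
  assume "x \<in> lat M"
  then obtain a where "x = M *v a" unfolding lat_def by auto
  then have "- x = M *v (- a)"
    by (simp add: vec_eq_iff matrix_vector_mult_def sum_negf)
  then show ?thesis unfolding lat_def by (metis rangeI)
qed

lemma equiv_latrel: "equiv UNIV (latrel M)"
proof (rule equivI)
  show "latrel M \<subseteq> UNIV \<times> UNIV" by auto
  show "refl (latrel M)" by (rule refl_onI) (auto simp: latrel_def lat_0)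
  show "sym (latrel M)" unfolding sym_def latrel_def using lat_neg by fastforce
  show "trans (latrel M)" unfolding trans_def latrel_def
  proof (clarsimp)
    fix x y z assume "x - y \<in> lat M" "y - z \<in> lat M"
    then have "(x - y) + (y - z) \<in> lat M" by (rule lat_add)
    then show "x - z \<in> lat M" by simp
  qed
qed

lemma lower_index:
  fixes M :: "int^'d^'d" and h :: "'d \<Rightarrow> nat"
  assumes "inj h" and low: "\<forall>i j. h i < h j \<longrightarrow> M$i$j = 0" and nz: "det M \<noteq> 0"
  shows "card (UNIV // latrel M) = nat \<bar>det M\<bar>"
proof -
  have dM: "det M = (\<Prod>i\<in>UNIV. M$i$i)" by (rule det_lower[OF assms(1) low])
  have dpos: "M$i$i \<noteq> 0" for i using nz dM by (auto simp: prod_zero_iff)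
  define R where "R = {v::int^'d. \<forall>i. 0 \<le> v$i \<and> v$i < \<bar>M$i$i\<bar>}"
  have mv: "(M *v c)$i = (\<Sum>j\<in>UNIV. M$i$j * c$j)" for c i
    by (simp add: matrix_vector_mult_def)
  have uniq: "r = r'" if rR: "r \<in> R" "r' \<in> R" "r - r' \<in> lat M" for r r'
  proof -
    obtain c where c: "r - r' = M *v c" using rR(3) unfolding lat_def by auto
    have "c = 0"
    proof (rule ccontr)
      assume "c \<noteq> 0"
      then have ne: "{i. c$i \<noteq> 0} \<noteq> {}" by (auto simp: vec_eq_iff)
      define m where "m = Min (h ` {i. c$i \<noteq> 0})"
      have "m \<in> h ` {i. c$i \<noteq> 0}" unfolding m_def using ne by (intro Min_in) auto
      then obtain i0 where i0: "c$i0 \<noteq> 0" "h i0 = m" by auto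
      have mn: "h i0 \<le> h j" if "c$j \<noteq> 0" for j
      proof -
        have "Min (h ` {i. c$i \<noteq> 0}) \<le> h j" by (rule Min_le) (use that in auto)
        then show ?thesis using i0(2) unfolding m_def by simp
      qed
      have "(\<Sum>j\<in>UNIV. M$i0$j * c$j) = M$i0$i0 * c$i0"
      proof (rule sum_single)
        fix j assume "j \<in> UNIV" "j \<noteq> i0"
        then have "h j \<noteq> h i0" using assms(1) by (metis injD)
        then show "M$i0$j * c$j = 0"
          using low mn by (metis linorder_neqE_nat mult_eq_0_iff not_le)
      qed auto
      then have "(r - r')$i0 = M$i0$i0 * c$i0" using c mv by simp
      moreover have "\<bar>M$i0$i0 * c$i0\<bar> \<ge> \<bar>M$i0$i0\<bar>"
        using i0(1) by (simp add: abs_mult mult_le_cancel_left1) linarith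
      moreover have "\<bar>(r - r')$i0\<bar> < \<bar>M$i0$i0\<bar>" proof -
        have "0 \<le> r$i0" "r$i0 < \<bar>M$i0$i0\<bar>" "0 \<le> r'$i0" "r'$i0 < \<bar>M$i0$i0\<bar>"
          using rR(1,2) unfolding R_def by auto
        then show ?thesis by (simp add: abs_less_iff)
      qed
      ultimately show False by simp
    qed
    then show ?thesis using c by simp
  qed
  have ex_k: "\<exists>c. \<forall>i. h i < k \<longrightarrow> 0 \<le> (v - M *v c)$i \<and> (v - M *v c)$i < \<bar>M$i$i\<bar>" for v k
  proof (induction k)
    case 0 then show ?case by auto
  next
    case (Suc k)
    then obtain c where c: "\<forall>i. h i < k \<longrightarrow> 0 \<le> (v - M *v c)$i \<and> (v - M *v c)$i < \<bar>M$i$i\<bar>" by blast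
    show ?case
    proof (cases "\<exists>i0. h i0 = k")
      case False
      then show ?thesis using c by (metis less_SucE)
    next
      case True
      then obtain i0 where i0: "h i0 = k" by blast
      define w where "w = (v - M *v c)$i0"
      define d where "d = \<bar>M$i0$i0\<bar>"
      define q where "q = (w div d) * sgn (M$i0$i0)"
      define c' where "c' = (\<chi> j. if j = i0 then c$i0 + q else c$j)"
      have mc': "(M *v c')$i = (M *v c)$i + q * M$i$i0" for i
      proof -
        have "(\<Sum>j\<in>UNIV. M$i$j * c'$j) = (\<Sum>j\<in>UNIV. M$i$j * c$j + (if j = i0 then q * M$i$i0 else 0))"
          by (rule sum.cong) (auto simp: c'_def algebra_simps)
        then show ?thesis by (simp add: mv sum.distrib)
      qed
      have low0: "M$i$i0 = 0" if "h i < k" for i using low that i0 by auto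
      have "0 \<le> (v - M *v c')$i \<and> (v - M *v c')$i < \<bar>M$i$i\<bar>" if "h i < Suc k" for i
      proof (cases "h i < k")
        case True then show ?thesis using c mc' low0 by simp
      next
        case False
        then have "i = i0" using that i0 assms(1) by (metis injD less_SucE)
        have dp: "d > 0" using dpos unfolding d_def by simp
        have "(v - M *v c')$i0 = w - q * M$i0$i0" using mc' unfolding w_def by simp
        also have "q * M$i0$i0 = (w div d) * d"
          using dpos[of i0] by (cases "M$i0$i0 > 0") (auto simp: q_def d_def)
        also have "w - (w div d) * d = w mod d" by (simp add: minus_div_mult_eq_mod)
        finally show ?thesis using \<open>i = i0\<close> dp unfolding d_def by simp
      qed
      then show ?thesis by blast
    qed
  qed
  have exR: "\<exists>r\<in>R. (v, r) \<in> latrel M" for v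
  proof -
    define k where "k = Suc (Max (range h))"
    have "h i < k" for i unfolding k_def by (simp add: le_imp_less_Suc)
    then obtain c where "\<forall>i. 0 \<le> (v - M *v c)$i \<and> (v - M *v c)$i < \<bar>M$i$i\<bar>" using ex_k by blast
    then have "v - M *v c \<in> R" unfolding R_def by blast
    moreover have "(v, v - M *v c) \<in> latrel M" unfolding latrel_def lat_def by auto
    ultimately show ?thesis by blast
  qed
  have E: "equiv UNIV (latrel M)" by (rule equiv_latrel)
  have img: "UNIV // latrel M = (\<lambda>r. latrel M `` {r}) ` R"
  proof (intro equalityI subsetI)
    fix X assume "X \<in> UNIV // latrel M"
    then obtain v where X: "X = latrel M `` {v}" by (auto simp: quotient_def)
    obtain r where r: "r \<in> R" "(v, r) \<in> latrel M" using exR by blast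
    have "latrel M `` {v} = latrel M `` {r}" using equiv_class_eq[OF E r(2)] .
    then show "X \<in> (\<lambda>r. latrel M `` {r}) ` R" using X r by auto
  next
    fix X assume "X \<in> (\<lambda>r. latrel M `` {r}) ` R"
    then show "X \<in> UNIV // latrel M" by (auto simp: quotient_def)
  qed
  have inj: "inj_on (\<lambda>r. latrel M `` {r}) R"
  proof (rule inj_onI)
    fix r r' assume r: "r \<in> R" "r' \<in> R" "latrel M `` {r} = latrel M `` {r'}"
    then have "(r, r') \<in> latrel M" using eq_equiv_class_iff[OF E] by blast
    then show "r = r'" using uniq r unfolding latrel_def by auto
  qed
  have "card (UNIV // latrel M) = card R" unfolding img by (rule card_image[OF inj])
  also have "card R = card (PiE UNIV (\<lambda>i. {0..<\<bar>M$i$i\<bar>}))"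
  proof (rule bij_betw_same_card[of vec_nth])
    show "bij_betw vec_nth R (PiE UNIV (\<lambda>i. {0..<\<bar>M$i$i\<bar>}))"
      unfolding bij_betw_def
    proof
      show "inj_on vec_nth R" by (meson inj_onI vec_nth_inject)
      show "vec_nth ` R = PiE UNIV (\<lambda>i. {0..<\<bar>M$i$i\<bar>})"
      proof (intro equalityI subsetI)
        fix f assume "f \<in> vec_nth ` R" then show "f \<in> PiE UNIV (\<lambda>i. {0..<\<bar>M$i$i\<bar>})"
          unfolding R_def by (auto simp: PiE_UNIV_domain)
      next
        fix f assume "f \<in> PiE UNIV (\<lambda>i. {0..<\<bar>M$i$i\<bar>})"
        then have "vec_lambda f \<in> R" "vec_nth (vec_lambda f) = f"
          unfolding R_def by (auto simp: PiE_UNIV_domain)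
        then show "f \<in> vec_nth ` R" by force
      qed
    qed
  qed
  also have "\<dots> = (\<Prod>i\<in>UNIV. nat \<bar>M$i$i\<bar>)" by (simp add: card_PiE)
  also have "\<dots> = nat \<bar>det M\<bar>"
  proof -
    have "int (\<Prod>i\<in>UNIV. nat \<bar>M$i$i\<bar>) = \<bar>det M\<bar>" unfolding dM by (simp add: of_nat_prod abs_prod)
    then show ?thesis by (metis nat_int)
  qed
  finally show ?thesis .
qed

theorem index_det:
  fixes M :: "int^'d^'d"
  assumes "det M \<noteq> 0"
  shows "card (UNIV // latrel M) = nat \<bar>det M\<bar>"
proof -
  obtain h :: "'d \<Rightarrow> nat" where h: "inj h"
    using finite_imp_inj_to_nat_seg[of "UNIV :: 'd set"] by auto
  obtain M' where M': "ceq M M'" "\<forall>i j. h i < h j \<longrightarrow> M'$i$j = 0"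
    using lower_exists[OF h] by blast
  have "latrel M = latrel M'" "\<bar>det M\<bar> = \<bar>det M'\<bar>" using M'(1) by (auto simp: ceq_def latrel_def)
  moreover have "det M' \<noteq> 0" using assms \<open>\<bar>det M\<bar> = \<bar>det M'\<bar>\<close> by auto
  ultimately show ?thesis using lower_index[OF h M'(2)] by simp
qed

definition colsub :: "int^'n^'d \<Rightarrow> ('d \<Rightarrow> 'n) \<Rightarrow> int^'d^'d" where
  "colsub X f = (\<chi> i j. X$i$(f j))"

definition realm :: "int^'d^'d \<Rightarrow> real^'d^'d" where
  "realm M = (\<chi> i j. real_of_int (M$i$j))"

lemma det_realm: "det (realm M) = real_of_int (det M)"
  by (simp add: det_def realm_def)

lemma columns_realm_colsub: "columns (realm (colsub X f)) = real_col X ` range f"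
  by (auto simp: columns_def column_def realm_def colsub_def real_col_def)

lemma am_rank_colsub: "am_rank X (range f) = rank (realm (colsub X f))"
  unfolding am_rank_def column_rank_def columns_realm_colsub by simp

lemma am_rank_full_iff:
  fixes X :: "int^'n^'d"
  shows "am_rank X (range f) = CARD('d) \<longleftrightarrow> det (colsub X f) \<noteq> 0"
proof -
  have "rank (realm (colsub X f)) \<le> CARD('d)" using rank_bound[of "realm (colsub X f)"] by simp
  then show ?thesis
    unfolding am_rank_colsub using det_eq_0_rank[of "realm (colsub X f)"]
    by (auto simp: det_realm)
qed

lemma span_full:
  fixes X :: "int^'n^'d" and f :: "'d \<Rightarrow> 'n"
  assumes "am_rank X (range f) = CARD('d)"
  shows "span (real_col X ` range f) = UNIV"
proof -
  have "surj ((*v) (realm (colsub X f)))"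
    using assms full_rank_surjective unfolding am_rank_colsub by blast
  then have "y \<in> span (columns (realm (colsub X f)))" for y
    by (metis matrix_vector_mult_in_columnspace surjD)
  then show ?thesis unfolding columns_realm_colsub by auto
qed

lemma int_span_colsub:
  fixes X :: "int^'n^'d"
  assumes "inj f"
  shows "int_span_cols X (range f) = lat (colsub X f)"
proof -
  have col: "column j (colsub X f) = column (f j) X" for j
    by (simp add: column_def colsub_def vec_eq_iff)
  have ms: "colsub X f *v a = (\<Sum>j\<in>UNIV. a$j *s column (f j) X)" for a
    by (simp add: matrix_mult_sum col)
  have rs: "(\<Sum>e\<in>range f. c e *s column e X) = (\<Sum>j\<in>UNIV. c (f j) *s column (f j) X)" for c
    using sum.reindex[of f UNIV "\<lambda>e. c e *s column e X"] assms by simp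
  show ?thesis
    unfolding int_span_cols_def lat_def
  proof (intro equalityI subsetI)
    fix v assume "v \<in> {v. \<exists>c. v = (\<Sum>e\<in>range f. c e *s column e X)}"
    then obtain c where "v = (\<Sum>e\<in>range f. c e *s column e X)" by auto
    then have "v = colsub X f *v (\<chi> j. c (f j))" by (simp add: rs ms)
    then show "v \<in> range ((*v) (colsub X f))" by auto
  next
    fix v assume "v \<in> range ((*v) (colsub X f))"
    then obtain a where "v = colsub X f *v a" by auto
    moreover have "(\<Sum>j\<in>UNIV. a$j *s column (f j) X) = (\<Sum>j\<in>UNIV. (\<lambda>e. a $ inv f e) (f j) *s column (f j) X)"
      using assms by simp
    ultimately have "v = (\<Sum>e\<in>range f. (\<lambda>e. a $ inv f e) e *s column e X)"
      by (simp only: ms rs)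
    then show "v \<in> {v. \<exists>c. v = (\<Sum>e\<in>range f. c e *s column e X)}"
      by (intro CollectI exI[of _ "\<lambda>e. a $ inv f e"])
  qed
qed

theorem am_mult_colsub:
  fixes X :: "int^'n^'d"
  assumes "inj f" "det (colsub X f) \<noteq> 0"
  shows "am_mult X (range f) = nat \<bar>det (colsub X f)\<bar>"
proof -
  have r: "am_rank X (range f) = CARD('d)" using am_rank_full_iff assms(2) by blast
  have sat: "saturation X (range f) = UNIV"
    unfolding saturation_def using span_full[OF r] by auto
  have "{(v, w). v \<in> saturation X (range f) \<and> w \<in> saturation X (range f) \<and> v - w \<in> int_span_cols X (range f)}
        = latrel (colsub X f)"
    unfolding sat int_span_colsub[OF assms(1)] latrel_def by auto
  then have "am_mult X (range f) = card (UNIV // latrel (colsub X f))"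
    unfolding am_mult_def sat by simp
  also have "\<dots> = nat \<bar>det (colsub X f)\<bar>" by (rule index_det[OF assms(2)])
  finally show ?thesis .
qed

theorem same_absdet:
  fixes X X' :: "int^'n^'d"
  assumes "same_arith_matroid X X'"
  shows "\<bar>det (colsub X f)\<bar> = \<bar>det (colsub X' f)\<bar>"
proof (cases "inj f")
  case False
  then obtain j k where jk: "j \<noteq> k" "f j = f k" by (auto simp: inj_def)
  have "column j (colsub Y f) = column k (colsub Y f)" for Y :: "int^'n^'d"
    using jk by (simp add: column_def colsub_def vec_eq_iff)
  then have "det (colsub X f) = 0" "det (colsub X' f) = 0"
    using det_identical_columns[OF jk(1)] by blast+
  then show ?thesis by simp
next
  case True
  have rk: "am_rank X (range f) = am_rank X' (range f)" "am_mult X (range f) = am_mult X' (range f)"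
    using assms unfolding same_arith_matroid_def by auto
  show ?thesis
  proof (cases "det (colsub X f) = 0")
    case True
    then have "det (colsub X' f) = 0" using rk(1) am_rank_full_iff[of X f] am_rank_full_iff[of X' f] by auto
    then show ?thesis using True by simp
  next
    case False
    then have F': "det (colsub X' f) \<noteq> 0" using rk(1) am_rank_full_iff[of X f] am_rank_full_iff[of X' f] by auto
    have "nat \<bar>det (colsub X f)\<bar> = nat \<bar>det (colsub X' f)\<bar>"
      using am_mult_colsub[OF \<open>inj f\<close> False] am_mult_colsub[OF \<open>inj f\<close> F'] rk(2) by simp
    then show ?thesis by simp
  qed
qed

lemma card_quotient_reps:
  assumes E: "equiv A r" and RA: "R \<subseteq> A"
    and ex: "\<And>a. a \<in> A \<Longrightarrow> \<exists>x\<in>R. (a, x) \<in> r"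
    and un: "\<And>x y. x \<in> R \<Longrightarrow> y \<in> R \<Longrightarrow> (x, y) \<in> r \<Longrightarrow> x = y"
  shows "card (A // r) = card R"
proof -
  have img: "A // r = (\<lambda>x. r `` {x}) ` R"
  proof (intro equalityI subsetI)
    fix X assume "X \<in> A // r"
    then obtain a where X: "a \<in> A" "X = r `` {a}" by (auto simp: quotient_def)
    obtain x where x: "x \<in> R" "(a, x) \<in> r" using ex[OF X(1)] by blast
    have "r `` {a} = r `` {x}" using equiv_class_eq[OF E x(2)] .
    then show "X \<in> (\<lambda>x. r `` {x}) ` R" using X x by auto
  next
    fix X assume "X \<in> (\<lambda>x. r `` {x}) ` R"
    then show "X \<in> A // r" using RA by (auto simp: quotient_def)
  qed
  have inj: "inj_on (\<lambda>x. r `` {x}) R"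
  proof (rule inj_onI)
    fix x y assume xy: "x \<in> R" "y \<in> R" "r `` {x} = r `` {y}"
    then have "(x, y) \<in> r" using eq_equiv_class_iff[OF E] RA by blast
    then show "x = y" using un xy by blast
  qed
  show ?thesis unfolding img by (rule card_image[OF inj])
qed

lemma gcd_bezout_sum:
  fixes x :: "'i \<Rightarrow> int"
  assumes "finite A"
  shows "\<exists>u. (\<Sum>i\<in>A. u i * x i) = Gcd (x ` A)"
  using assms
proof (induction A rule: finite_induct)
  case empty then show ?case by simp
next
  case (insert a A)
  then obtain u where u: "(\<Sum>i\<in>A. u i * x i) = Gcd (x ` A)" by blast
  obtain s t where st: "s * x a + t * Gcd (x ` A) = gcd (x a) (Gcd (x ` A))" using bezout_int by blast
  define u' where "u' = (\<lambda>i. if i = a then s else t * u i)"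
  have "(\<Sum>i\<in>insert a A. u' i * x i) = s * x a + (\<Sum>i\<in>A. t * u i * x i)"
    using insert by (simp add: u'_def) (rule sum.cong, auto)
  also have "(\<Sum>i\<in>A. t * u i * x i) = t * Gcd (x ` A)"
    by (simp add: u[symmetric] sum_distrib_left mult.assoc)
  finally show ?case using st by auto
qed

definition gcdv :: "int^'d \<Rightarrow> int" where
  "gcdv x = Gcd (range (vec_nth x))"

lemma gcdv_props:
  fixes x :: "int^'d"
  assumes "x \<noteq> 0"
  shows "gcdv x > 0" and "\<exists>p. x = gcdv x *s p \<and> (\<exists>u. (\<Sum>i\<in>UNIV. u i * p$i) = 1)"
proof -
  have ne: "\<not> range (vec_nth x) \<subseteq> {0}" using assms by (auto simp: vec_eq_iff)
  show gp: "gcdv x > 0" unfolding gcdv_def using ne Gcd_0_iff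
    by (metis Gcd_int_greater_eq_0 order_le_less)
  define g where "g = gcdv x"
  have dv: "g dvd x$i" for i unfolding g_def gcdv_def by (simp add: Gcd_dvd)
  define p where "p = (\<chi> i. x$i div g)"
  have xp: "x = g *s p" using dv by (simp add: p_def vec_eq_iff)
  obtain u where u: "(\<Sum>i\<in>UNIV. u i * x$i) = g"
    using gcd_bezout_sum[of UNIV "vec_nth x"] unfolding g_def gcdv_def by auto
  have "(\<Sum>i\<in>UNIV. u i * x$i) = g * (\<Sum>i\<in>UNIV. u i * p$i)"
    by (subst xp) (simp add: sum_distrib_left algebra_simps)
  then have "(\<Sum>i\<in>UNIV. u i * p$i) = 1" using u gp unfolding g_def by simp
  then show "\<exists>p. x = gcdv x *s p \<and> (\<exists>u. (\<Sum>i\<in>UNIV. u i * p$i) = 1)"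
    using xp unfolding g_def by blast
qed

lemma am_mult_single:
  fixes X :: "int^'n^'d"
  assumes "column b X \<noteq> 0"
  shows "am_mult X {b} = nat (gcdv (column b X))"
proof -
  define x where "x = column b X"
  define g where "g = gcdv x"
  have gp: "g > 0" using gcdv_props(1) assms unfolding g_def x_def by blast
  obtain p u where xp: "x = g *s p" and u: "(\<Sum>i\<in>UNIV. u i * p$i) = 1"
    using gcdv_props(2) assms unfolding g_def x_def by blast
  have pnz: "p \<noteq> 0" using xp assms unfolding x_def by auto
  have rc: "real_col X b = (\<chi> i. real_of_int (x$i))"
    by (simp add: real_col_def x_def column_def)
  define S where "S = saturation X {b}"
  define L where "L = int_span_cols X {b}"
  have S: "S = range (\<lambda>n. n *s p)"
  proof (intro equalityI subsetI)
    fix v assume "v \<in> S"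
    then have "(\<chi> i. real_of_int (v$i)) \<in> span {real_col X b}"
      unfolding S_def saturation_def by simp
    then obtain t where t: "(\<chi> i. real_of_int (v$i)) = t *\<^sub>R real_col X b"
      by (auto simp: span_singleton)
    have vi: "real_of_int (v$i) = t * real_of_int g * real_of_int (p$i)" for i
      using arg_cong[OF t, of "\<lambda>w. w$i"] by (simp add: rc xp)
    define n where "n = (\<Sum>i\<in>UNIV. u i * v$i)"
    have "real_of_int n = (\<Sum>i\<in>UNIV. real_of_int (u i) * (t * real_of_int g * real_of_int (p$i)))"
      unfolding n_def by (simp add: vi)
    also have "\<dots> = t * real_of_int g * real_of_int (\<Sum>i\<in>UNIV. u i * p$i)"
      by (simp add: sum_distrib_left algebra_simps)
    finally have "real_of_int n = t * real_of_int g" using u by simp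
    then have "v = n *s p" using vi by (simp add: vec_eq_iff) (metis of_int_eq_iff of_int_mult)
    then show "v \<in> range (\<lambda>n. n *s p)" by auto
  next
    fix v assume "v \<in> range (\<lambda>n. n *s p)"
    then obtain n where v: "v = n *s p" by auto
    have "(\<chi> i. real_of_int (v$i)) = (real_of_int n / real_of_int g) *\<^sub>R real_col X b"
      using gp by (simp add: rc xp v vec_eq_iff)
    then show "v \<in> S" unfolding S_def saturation_def by (simp add: span_singleton) (metis rangeI)
  qed
  have L: "L = range (\<lambda>m. (m * g) *s p)"
    unfolding L_def int_span_cols_def
    by (auto simp: x_def[symmetric] xp vector_smult_assoc)
  define r where "r = {(v, w). v \<in> S \<and> w \<in> S \<and> v - w \<in> L}"
  have Lsub: "a - b' \<in> L" if ab: "a \<in> L" "b' \<in> L" for a b'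
  proof -
    obtain m1 m2 where "a = (m1 * g) *s p" "b' = (m2 * g) *s p" using ab L by auto
    then have "a - b' = ((m1 - m2) * g) *s p" by (simp add: algebra_simps vec_eq_iff)
    then show ?thesis using L by auto
  qed
  have L0: "0 \<in> L" using L by (auto intro!: image_eqI[of _ _ 0])
  have E: "equiv S r"
  proof (rule equivI)
    show "r \<subseteq> S \<times> S" unfolding r_def by auto
    show "refl_on S r" by (rule refl_onI) (auto simp: r_def L0)
    show "sym r" unfolding sym_def r_def
    proof (clarsimp)
      fix x y assume "x - y \<in> L"
      then have "0 - (x - y) \<in> L" by (meson L0 Lsub)
      then show "y - x \<in> L" by simp
    qed
    show "trans r" unfolding trans_def r_def
    proof (clarsimp)
      fix x y z assume "x - y \<in> L" "y - z \<in> L"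
      then have "x - y - (0 - (y - z)) \<in> L" by (meson L0 Lsub)
      then show "x - z \<in> L" by simp
    qed
  qed
  define R where "R = (\<lambda>n. n *s p) ` {0..<g}"
  have injp: "n = n'" if "n *s p = n' *s p" for n n'
  proof -
    obtain i where "p$i \<noteq> 0" using pnz by (auto simp: vec_eq_iff)
    then show ?thesis using arg_cong[OF that, of "\<lambda>w. w$i"] by simp
  qed
  have "card (S // r) = card R"
  proof (rule card_quotient_reps[OF E])
    show "R \<subseteq> S" unfolding R_def S by auto
  next
    fix a assume "a \<in> S"
    then obtain n where a: "a = n *s p" using S by auto
    have "a - (n mod g) *s p = ((n div g) * g) *s p"
    proof -
      have "n - n mod g = (n div g) * g" by (simp add: minus_mod_eq_div_mult)
      then show ?thesis unfolding a by (simp add: vec_eq_iff left_diff_distrib[symmetric])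
    qed
    then have "a - (n mod g) *s p \<in> L" using L by auto
    moreover have "(n mod g) *s p \<in> R" unfolding R_def using gp by auto
    moreover have "(n mod g) *s p \<in> S" using S by auto
    ultimately show "\<exists>x\<in>R. (a, x) \<in> r" unfolding r_def using \<open>a \<in> S\<close> by auto
  next
    fix x y assume xy: "x \<in> R" "y \<in> R" "(x, y) \<in> r"
    then obtain n n' where n: "x = n *s p" "y = n' *s p" "0 \<le> n" "n < g" "0 \<le> n'" "n' < g"
      unfolding R_def by auto
    obtain m where "x - y = (m * g) *s p" using xy(3) L unfolding r_def by auto
    then have "(n - n') *s p = (m * g) *s p" using n by (simp add: algebra_simps vec_eq_iff)
    then have "n - n' = m * g" by (rule injp)
    moreover have "m = 0"
    proof (rule ccontr)
      assume "m \<noteq> 0"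
      then have "1 \<le> \<bar>m\<bar>" by simp
      then have "g \<le> \<bar>m\<bar> * g" using gp by simp
      also have "\<bar>m\<bar> * g = \<bar>n - n'\<bar>" using \<open>n - n' = m * g\<close> gp by (simp add: abs_mult)
      also have "\<bar>n - n'\<bar> < g" using n by (simp add: abs_less_iff)
      finally show False by simp
    qed
    ultimately have "n = n'" by simp
    then show "x = y" using n by simp
  qed
  also have "card R = card {0..<g}"
    unfolding R_def by (rule card_image) (meson inj_onI injp)
  also have "\<dots> = nat g" by simp
  finally show ?thesis unfolding am_mult_def S_def[symmetric] L_def[symmetric] r_def[symmetric] g_def x_def .
qed

definition walk :: "('d \<Rightarrow> 'n \<Rightarrow> int) \<Rightarrow> 'n set \<Rightarrow> nat \<Rightarrow> (nat \<Rightarrow> 'd) \<Rightarrow> (nat \<Rightarrow> 'n) \<Rightarrow> bool" where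
  "walk A F k r c \<longleftrightarrow> (\<forall>a<k. c a \<in> F \<and> A (r a) (c a) \<noteq> 0 \<and> A (r (Suc a)) (c a) \<noteq> 0)"

lemma walk_jump:
  assumes w: "walk A F k r c" and uv: "Suc u < v" "v \<le> k"
    and col: "col \<in> F" "A (r u) col \<noteq> 0" "A (r v) col \<noteq> 0"
  shows "\<exists>r' c'. walk A F (Suc u + (k - v)) r' c' \<and> r' 0 = r 0 \<and> r' (Suc u + (k - v)) = r k"
proof -
  define d where "d = v - Suc u"
  define r' where "r' = (\<lambda>a. if a \<le> u then r a else r (a + d))"
  define c' where "c' = (\<lambda>a. if a < u then c a else if a = u then col else c (a + d))"
  have "walk A F (Suc u + (k - v)) r' c'"
    unfolding walk_def
  proof (intro allI impI)
    fix a assume a: "a < Suc u + (k - v)"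
    show "c' a \<in> F \<and> A (r' a) (c' a) \<noteq> 0 \<and> A (r' (Suc a)) (c' a) \<noteq> 0"
    proof (cases "a < u")
      case True then show ?thesis using w uv unfolding walk_def r'_def c'_def by auto
    next
      case False
      show ?thesis
      proof (cases "a = u")
        case True
        have "Suc u + d = v" using uv unfolding d_def by simp
        then show ?thesis using True col unfolding r'_def c'_def by auto
      next
        case False
        then have "a > u" using \<open>\<not> a < u\<close> by simp
        moreover have "a + d < k" using a uv unfolding d_def by simp
        ultimately show ?thesis using w unfolding walk_def r'_def c'_def by auto
      qed
    qed
  qed
  moreover have "r' 0 = r 0" unfolding r'_def by simp
  moreover have "r' (Suc u + (k - v)) = r k"
  proof -
    have "\<not> Suc u + (k - v) \<le> u" by simp
    moreover have "Suc u + (k - v) + d = k" using uv unfolding d_def by simp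
    ultimately show ?thesis unfolding r'_def by simp
  qed
  ultimately show ?thesis by blast
qed

lemma walk_skip:
  assumes w: "walk A F k r c" and uv: "u < v" "v \<le> k" and eq: "r u = r v"
  shows "\<exists>r' c'. walk A F (u + (k - v)) r' c' \<and> r' 0 = r 0 \<and> r' (u + (k - v)) = r k"
proof -
  define d where "d = v - u"
  define r' where "r' = (\<lambda>a. if a \<le> u then r a else r (a + d))"
  define c' where "c' = (\<lambda>a. if a < u then c a else c (a + d))"
  have rr: "r' a = r (a + d)" if "a \<ge> u" for a
    using that eq uv unfolding r'_def d_def by auto
  have "walk A F (u + (k - v)) r' c'"
    unfolding walk_def
  proof (intro allI impI)
    fix a assume a: "a < u + (k - v)"
    show "c' a \<in> F \<and> A (r' a) (c' a) \<noteq> 0 \<and> A (r' (Suc a)) (c' a) \<noteq> 0"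
    proof (cases "a < u")
      case True then show ?thesis using w uv unfolding walk_def r'_def c'_def by auto
    next
      case False
      have "a + d < k" using a uv unfolding d_def by simp
      moreover have "r' a = r (a + d)" "r' (Suc a) = r (Suc (a + d))" using rr False by auto
      ultimately show ?thesis using w False unfolding walk_def c'_def by auto
    qed
  qed
  moreover have "r' 0 = r 0" unfolding r'_def by simp
  moreover have "r' (u + (k - v)) = r k"
    using rr[of "u + (k - v)"] uv unfolding d_def by simp
  ultimately show ?thesis by blast
qed

lemma walk_prefix:
  assumes "walk A F k r c" "m \<le> k" shows "walk A F m r c"
  using assms unfolding walk_def by auto

lemma walk_suffix:
  assumes "walk A F k r c" "m \<le> k" shows "walk A F (k - m) (\<lambda>a. r (a + m)) (\<lambda>a. c (a + m))"
  using assms unfolding walk_def by auto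

definition adj :: "('d \<Rightarrow> 'n \<Rightarrow> int) \<Rightarrow> 'n set \<Rightarrow> 'd \<Rightarrow> 'd \<Rightarrow> bool" where
  "adj A F i j \<longleftrightarrow> (\<exists>e'\<in>F. A i e' \<noteq> 0 \<and> A j e' \<noteq> 0)"

lemma conn_walk:
  assumes "(adj A F)\<^sup>*\<^sup>* i j"
  shows "\<exists>k r c. walk A F k r c \<and> r 0 = i \<and> r k = j"
  using assms
proof (induction rule: rtranclp_induct)
  case base
  show ?case by (rule exI[of _ 0], rule exI[of _ "\<lambda>_. i"]) (auto simp: walk_def)
next
  case (step j l)
  then obtain k r c where w: "walk A F k r c" "r 0 = i" "r k = j" by blast
  obtain e' where e': "e' \<in> F" "A j e' \<noteq> 0" "A l e' \<noteq> 0" using step(2) unfolding adj_def by blast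
  define r' where "r' = r(Suc k := l)"
  define c' where "c' = c(k := e')"
  have "walk A F (Suc k) r' c'"
    using w e' unfolding walk_def r'_def c'_def by (auto simp: less_Suc_eq)
  moreover have "r' 0 = i" "r' (Suc k) = l" using w unfolding r'_def by auto
  ultimately show ?case by blast
qed

definition gdet :: "('d \<Rightarrow> 'n \<Rightarrow> int) \<Rightarrow> ('d \<Rightarrow> 'n) \<Rightarrow> 'd set \<Rightarrow> int" where
  "gdet A c I = (\<Sum>p\<in>{p. p permutes I}. sign p * (\<Prod>x\<in>I. A x (c (p x))))"

lemma cycle_gdet:
  fixes A :: "'d::finite \<Rightarrow> 'n \<Rightarrow> int"
  assumes w: "walk A F k r c" and k: "0 < k" and inj: "inj_on r {0..k}"
    and interior: "\<And>m. 0 < m \<Longrightarrow> m < k \<Longrightarrow> A (r m) e = 0"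
    and chord: "\<And>a b. a < k \<Longrightarrow> b \<le> k \<Longrightarrow> A (r b) (c a) \<noteq> 0 \<Longrightarrow> b = a \<or> b = Suc a"
    and end0: "A (r 0) e \<noteq> 0" and endk: "A (r k) e \<noteq> 0"
  shows "\<exists>I cc nx s. (s = 1 \<or> s = -1) \<and> r 0 \<in> I \<and> r k \<in> I \<and> r 0 \<noteq> r k \<and> cc (r 0) = e \<and> nx (r k) = r 0
     \<and> (\<forall>x\<in>I. x \<noteq> r 0 \<longrightarrow> cc x \<in> F) \<and> (\<forall>x\<in>I. x \<noteq> r k \<longrightarrow> cc (nx x) \<in> F)
     \<and> (\<forall>x\<in>I. A x (cc x) \<noteq> 0 \<and> A x (cc (nx x)) \<noteq> 0) \<and> finite I
     \<and> (\<forall>W. (\<forall>x y. A x y = 0 \<longrightarrow> W x y = 0) \<longrightarrow>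
           gdet W cc I = (\<Prod>x\<in>I. W x (cc x)) + s * (\<Prod>x\<in>I. W x (cc (nx x))))"
proof -
  define I where "I = r ` {0..k}"
  define idx where "idx = the_inv_into {0..k} r"
  define nxi where "nxi = (\<lambda>a::nat. if a = k then 0 else Suc a)"
  define nx where "nx = (\<lambda>x. if x \<in> I then r (nxi (idx x)) else x)"
  define cc where "cc = (\<lambda>x. if idx x = 0 then e else c (idx x - 1))"
  have idx_r: "idx (r a) = a" if "a \<le> k" for a
    unfolding idx_def using the_inv_into_f_f[OF inj] that by simp
  have nx_r: "nx (r a) = r (nxi a)" if "a \<le> k" for a
    using that idx_r unfolding nx_def I_def by auto
  have cc_r: "cc (r a) = (if a = 0 then e else c (a - 1))" if "a \<le> k" for a
    using that idx_r unfolding cc_def by auto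
  have nxi_le: "nxi a \<le> k" if "a \<le> k" for a using that k unfolding nxi_def by auto
  have nxi_ne: "nxi a \<noteq> a" if "a \<le> k" for a using that k unfolding nxi_def by auto
  have r_eq: "r a = r b \<longleftrightarrow> a = b" if "a \<le> k" "b \<le> k" for a b
    using inj that by (auto dest: inj_onD)
  have Ix: "\<exists>a\<le>k. x = r a" if "x \<in> I" for x using that unfolding I_def by auto
  have rI: "r a \<in> I" if "a \<le> k" for a using that unfolding I_def by auto
  have finI: "finite I" unfolding I_def by simp
  have nxperm: "nx permutes I"
  proof (rule bij_imp_permutes)
    show "bij_betw nx I I"
    proof (rule bij_betw_imageI)
      show "inj_on nx I"
      proof (rule inj_onI)
        fix x y assume "x \<in> I" "y \<in> I" "nx x = nx y"
        then obtain a b where ab: "a \<le> k" "b \<le> k" "x = r a" "y = r b" "r (nxi a) = r (nxi b)"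
          using Ix nx_r by metis
        then have "nxi a = nxi b" using r_eq nxi_le by blast
        then have "a = b" using ab(1,2) k unfolding nxi_def by (auto split: if_splits)
        then show "x = y" using ab by simp
      qed
      show "nx ` I = I"
      proof (intro equalityI subsetI)
        fix y assume "y \<in> nx ` I"
        then obtain x where x: "x \<in> I" "y = nx x" by auto
        then obtain a where "a \<le> k" "x = r a" using Ix by blast
        then show "y \<in> I" using x nx_r rI nxi_le by simp
      next
        fix y assume "y \<in> I"
        then obtain b where b: "b \<le> k" "y = r b" using Ix by blast
        show "y \<in> nx ` I"
        proof (cases "b = 0")
          case True
          then have "nx (r k) = y" using b nx_r[of k] unfolding nxi_def by simp
          then show ?thesis using rI[of k] by force
        next
          case False
          then have "nx (r (b - 1)) = y" using b nx_r[of "b - 1"] k unfolding nxi_def by auto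
          then show ?thesis using rI[of "b - 1"] b by force
        qed
      qed
    qed
  next
    fix x assume "x \<notin> I" then show "nx x = x" unfolding nx_def by simp
  qed
  have cases2: "p = id \<or> p = nx" if p: "p permutes I" and nzp: "\<forall>x\<in>I. A x (cc (p x)) \<noteq> 0" for p
  proof -
    have step1: "p (r a) = r a \<or> p (r a) = nx (r a)" if a: "a \<le> k" for a
    proof -
      have "p (r a) \<in> I" using p rI[OF a] by (simp add: permutes_in_image)
      then obtain b where b: "b \<le> k" "p (r a) = r b" using Ix by blast
      have nz: "A (r a) (cc (r b)) \<noteq> 0" using nzp rI[OF a] b by metis
      show ?thesis
      proof (cases "b = 0")
        case True
        then have "A (r a) e \<noteq> 0" using nz cc_r[OF b(1)] by simp
        then have "a = 0 \<or> a = k" using interior a by (metis le_neq_implies_less not_gr0)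
        then show ?thesis using True b nx_r[of k] unfolding nxi_def by auto
      next
        case False
        then have "A (r a) (c (b - 1)) \<noteq> 0" using nz cc_r[OF b(1)] by simp
        then have "a = b - 1 \<or> a = Suc (b - 1)" using chord[of "b - 1" a] b False a by simp
        then show ?thesis
        proof
          assume "a = b - 1"
          then have "a < k" "nxi a = b" using False b unfolding nxi_def by auto
          then show ?thesis using b nx_r a by simp
        next
          assume "a = Suc (b - 1)"
          then show ?thesis using b False by simp
        qed
      qed
    qed
    show ?thesis
    proof (cases "\<forall>a\<le>k. p (r a) = r a")
      case True
      have "p = id"
      proof
        fix x show "p x = id x"
        proof (cases "x \<in> I")
          case True then show ?thesis using Ix \<open>\<forall>a\<le>k. p (r a) = r a\<close> by auto
        next
          case False then show ?thesis using p by (simp add: permutes_not_in)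
        qed
      qed
      then show ?thesis by simp
    next
      case False
      then obtain a0 where a0: "a0 \<le> k" "p (r a0) \<noteq> r a0" by blast
      then have Q0: "p (r a0) = nx (r a0)" using step1 by blast
      have propg: "p (r (nxi a)) = nx (r (nxi a))" if a: "a \<le> k" "p (r a) = nx (r a)" for a
      proof (rule ccontr)
        assume "\<not> ?thesis"
        then have "p (r (nxi a)) = r (nxi a)" using step1 nxi_le a(1) by blast
        also have "r (nxi a) = p (r a)" using a nx_r by simp
        finally have "r (nxi a) = r a" using p by (metis permutes_inj injD)
        then show False using r_eq nxi_le nxi_ne a(1) by blast
      qed
      have up: "p (r (a0 + m)) = nx (r (a0 + m))" if "a0 + m \<le> k" for m
        using that
      proof (induction m)
        case 0 then show ?case using Q0 by simp
      next
        case (Suc m)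
        then have "a0 + m < k" by simp
        then have "nxi (a0 + m) = a0 + Suc m" unfolding nxi_def by simp
        then show ?case using propg[of "a0 + m"] Suc by simp
      qed
      have Qk: "p (r k) = nx (r k)" using up[of "k - a0"] a0 by simp
      have Q0': "p (r 0) = nx (r 0)" using propg[OF _ Qk] unfolding nxi_def by simp
      have all: "p (r m) = nx (r m)" if "m \<le> k" for m
        using that
      proof (induction m)
        case 0 then show ?case using Q0' by simp
      next
        case (Suc m)
        then have "nxi m = Suc m" unfolding nxi_def by simp
        then show ?case using propg[of m] Suc by simp
      qed
      have "p = nx"
      proof
        fix x show "p x = nx x"
        proof (cases "x \<in> I")
          case True then show ?thesis using Ix all by auto
        next
          case False then show ?thesis using p nxperm by (simp add: permutes_not_in)
        qed
      qed
      then show ?thesis by simp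
    qed
  qed
  have idnx: "id \<noteq> nx"
  proof
    assume "id = nx"
    then have "r 0 = r (nxi 0)" using nx_r[of 0] by simp
    then show False using r_eq nxi_le nxi_ne k by (metis le0)
  qed
  define s where "s = (sign nx :: int)"
  have s: "s = 1 \<or> s = -1" unfolding s_def sign_def by simp
  have gd: "gdet W cc I = (\<Prod>x\<in>I. W x (cc x)) + s * (\<Prod>x\<in>I. W x (cc (nx x)))"
    if pat: "\<forall>x y. A x y = 0 \<longrightarrow> W x y = 0" for W
  proof -
    let ?t = "\<lambda>p. sign p * (\<Prod>x\<in>I. W x (cc (p x)))"
    have "gdet W cc I = sum ?t {p. p permutes I}" unfolding gdet_def by simp
    also have "\<dots> = sum ?t {id, nx}"
    proof (rule sum.mono_neutral_right)
      show "finite {p. p permutes I}" using finI by (rule finite_permutations)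
      show "{id, nx} \<subseteq> {p. p permutes I}" using nxperm by (auto simp: permutes_id)
      show "\<forall>p\<in>{p. p permutes I} - {id, nx}. ?t p = 0"
      proof
        fix p assume "p \<in> {p. p permutes I} - {id, nx}"
        then have "p permutes I" "\<not> (p = id \<or> p = nx)" by auto
        then have "\<not> (\<forall>x\<in>I. A x (cc (p x)) \<noteq> 0)" using cases2 by blast
        then obtain x where x: "x \<in> I" "A x (cc (p x)) = 0" by blast
        then have "W x (cc (p x)) = 0" using pat by blast
        then have "(\<Prod>x\<in>I. W x (cc (p x))) = 0" using x(1) by (intro prod_zero[OF finI]) blast
        then show "?t p = 0" by simp
      qed
    qed
    also have "\<dots> = ?t id + sum ?t {nx}" by (rule sum.insert) (use idnx in auto)
    also have "sum ?t {nx} = ?t nx" by simp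
    finally show ?thesis unfolding s_def by simp
  qed
  have r0k: "r 0 \<noteq> r k" using r_eq[of 0 k] k by simp
  have cc0: "cc (r 0) = e" using cc_r[of 0] by simp
  have nxk: "nx (r k) = r 0" using nx_r[of k] unfolding nxi_def by simp
  have ccF: "\<forall>x\<in>I. x \<noteq> r 0 \<longrightarrow> cc x \<in> F"
  proof (intro ballI impI)
    fix x assume "x \<in> I" "x \<noteq> r 0"
    obtain a where a0: "a \<le> k" "x = r a" using Ix \<open>x \<in> I\<close> by blast
    have "a \<noteq> 0" proof assume "a = 0" then show False using a0 \<open>x \<noteq> r 0\<close> by simp qed
    note a = a0 this
    then have "a - 1 < k" by simp
    then have "c (a - 1) \<in> F" using w unfolding walk_def by blast
    then show "cc x \<in> F" using cc_r[OF a(1)] a(2,3) by simp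
  qed
  have ccnF: "\<forall>x\<in>I. x \<noteq> r k \<longrightarrow> cc (nx x) \<in> F"
  proof (intro ballI impI)
    fix x assume "x \<in> I" "x \<noteq> r k"
    obtain a where a0: "a \<le> k" "x = r a" using Ix \<open>x \<in> I\<close> by blast
    have "a \<noteq> k" proof assume "a = k" then show False using a0 \<open>x \<noteq> r k\<close> by simp qed
    note a = a0 this
    then have ak: "a < k" by simp
    then have "nx x = r (Suc a)" using nx_r[OF a(1)] a(2) unfolding nxi_def by simp
    moreover have "cc (r (Suc a)) = c a" using cc_r[of "Suc a"] ak by simp
    moreover have "c a \<in> F" using w ak unfolding walk_def by blast
    ultimately show "cc (nx x) \<in> F" by simp
  qed
  have nzs: "\<forall>x\<in>I. A x (cc x) \<noteq> 0 \<and> A x (cc (nx x)) \<noteq> 0"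
  proof
    fix x assume "x \<in> I"
    then obtain a where a: "a \<le> k" "x = r a" using Ix by blast
    have 1: "A x (cc x) \<noteq> 0"
    proof (cases "a = 0")
      case True then show ?thesis using a cc_r[of 0] end0 by simp
    next
      case False
      then have "a - 1 < k" using a by simp
      then have "A (r (Suc (a - 1))) (c (a - 1)) \<noteq> 0" using w unfolding walk_def by blast
      moreover have "Suc (a - 1) = a" using False by simp
      ultimately show ?thesis using a cc_r[OF a(1)] False by simp
    qed
    have 2: "A x (cc (nx x)) \<noteq> 0"
    proof (cases "a = k")
      case True
      then have "cc (nx x) = e" using a nx_r[of k] cc_r[of 0] unfolding nxi_def by simp
      then show ?thesis using a True endk by simp
    next
      case False
      then have ak: "a < k" using a by simp
      then have "cc (nx x) = c a" using a nx_r[of a] cc_r[of "Suc a"] unfolding nxi_def by simp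
      moreover have "A (r a) (c a) \<noteq> 0" using w ak unfolding walk_def by blast
      ultimately show ?thesis using a by simp
    qed
    show "A x (cc x) \<noteq> 0 \<and> A x (cc (nx x)) \<noteq> 0" using 1 2 by simp
  qed
  have G: "\<forall>W. (\<forall>x y. A x y = 0 \<longrightarrow> W x y = 0) \<longrightarrow>
           gdet W cc I = (\<Prod>x\<in>I. W x (cc x)) + s * (\<Prod>x\<in>I. W x (cc (nx x)))"
    using gd by blast
  have "r 0 \<in> I" "r k \<in> I" using rI[of 0] rI[of k] by auto
  then show ?thesis
    by (intro exI[of _ I] exI[of _ cc] exI[of _ nx] exI[of _ s] conjI s r0k cc0 nxk ccF ccnF nzs finI G)
qed

lemma gdet_single: "gdet A c {x} = A x (c x)"
  unfolding gdet_def by simp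

lemma gdet_sign:
  fixes B :: "'d::finite \<Rightarrow> 'n \<Rightarrow> int"
  assumes "finite I"
  shows "gdet (\<lambda>x y. s x * t y * B x y) c I = (\<Prod>x\<in>I. s x * t (c x)) * gdet B c I"
proof -
  have "sign p * (\<Prod>x\<in>I. s x * t (c (p x)) * B x (c (p x))) =
        (\<Prod>x\<in>I. s x * t (c x)) * (sign p * (\<Prod>x\<in>I. B x (c (p x))))"
    if p: "p permutes I" for p
  proof -
    have "(\<Prod>x\<in>I. t (c (p x))) = (\<Prod>x\<in>I. t (c x))"
      using prod.permute[OF p, of "\<lambda>x. t (c x)"] by (simp add: comp_def)
    then show ?thesis by (simp add: prod.distrib)
  qed
  then have "gdet (\<lambda>x y. s x * t y * B x y) c I =
     (\<Sum>p\<in>{p. p permutes I}. (\<Prod>x\<in>I. s x * t (c x)) * (sign p * (\<Prod>x\<in>I. B x (c (p x)))))"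
    unfolding gdet_def by (intro sum.cong) auto
  then show ?thesis unfolding gdet_def by (simp add: sum_distrib_left)
qed

lemma abs_prod_signs:
  assumes "\<forall>i. s i = 1 \<or> s i = (-1::int)" "\<forall>e. t e = 1 \<or> t e = (-1::int)"
  shows "\<bar>\<Prod>x\<in>I. s x * t (c x)\<bar> = 1"
proof -
  have "\<bar>s x\<bar> = 1" "\<bar>t y\<bar> = 1" for x y using assms by (metis abs_minus_cancel abs_one)+
  then have "\<bar>s x * t (c x)\<bar> = 1" for x by (simp add: abs_mult)
  then show ?thesis by (simp add: abs_prod)
qed

context
  fixes A Z :: "'d::finite \<Rightarrow> 'n \<Rightarrow> int" and F :: "'n set" and e :: 'n
  assumes H: "\<forall>I c. \<bar>gdet A c I\<bar> = \<bar>gdet Z c I\<bar>"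
    and agree: "\<forall>i. \<forall>e'\<in>F. Z i e' = A i e'"
begin

lemma absZ: "\<bar>Z x y\<bar> = \<bar>A x y\<bar>"
  using H[rule_format, of "\<lambda>_. y" "{x}"] by (simp add: gdet_single)

definition dl :: "'d \<Rightarrow> int" where "dl i = (if Z i e = A i e then 1 else -1)"

lemma Z_dl: "Z i e = dl i * A i e"
  using absZ[of i e] unfolding dl_def by (auto simp: abs_eq_iff)

definition bad :: "nat \<Rightarrow> (nat \<Rightarrow> 'd) \<Rightarrow> (nat \<Rightarrow> 'n) \<Rightarrow> bool" where
  "bad k r c \<longleftrightarrow> walk A F k r c \<and> A (r 0) e \<noteq> 0 \<and> A (r k) e \<noteq> 0 \<and> dl (r 0) \<noteq> dl (r k)"

lemma no_min_bad:
  assumes b: "bad k r c" and minb: "\<And>k' r' c'. k' < k \<Longrightarrow> \<not> bad k' r' c'"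
  shows False
proof -
  have w: "walk A F k r c" and e0: "A (r 0) e \<noteq> 0" and ek: "A (r k) e \<noteq> 0" and d: "dl (r 0) \<noteq> dl (r k)"
    using b unfolding bad_def by auto
  have k: "0 < k" using d by (cases k) auto
  have interior: "A (r m) e = 0" if m: "0 < m" "m < k" for m
  proof (rule ccontr)
    assume nz: "A (r m) e \<noteq> 0"
    show False
    proof (cases "dl (r 0) = dl (r m)")
      case False
      then have "bad m r c" using walk_prefix[OF w] m nz e0 unfolding bad_def by auto
      then show False using minb m by blast
    next
      case True
      then have "dl (r m) \<noteq> dl (r k)" using d by simp
      then have "bad (k - m) (\<lambda>a. r (a + m)) (\<lambda>a. c (a + m))"
        using walk_suffix[OF w, of m] m nz ek unfolding bad_def by auto
      moreover have "k - m < k" using m by simp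
      ultimately show False using minb by blast
    qed
  qed
  have chord: "b' = a \<or> b' = Suc a" if ab: "a < k" "b' \<le> k" "A (r b') (c a) \<noteq> 0" for a b'
  proof (rule ccontr)
    assume nb: "\<not> (b' = a \<or> b' = Suc a)"
    have ca: "c a \<in> F" "A (r a) (c a) \<noteq> 0" "A (r (Suc a)) (c a) \<noteq> 0" using w ab(1) unfolding walk_def by auto
    show False
    proof (cases "b' < a")
      case True
      obtain r' c' where rc: "walk A F (Suc b' + (k - Suc a)) r' c'" "r' 0 = r 0" "r' (Suc b' + (k - Suc a)) = r k"
        using walk_jump[OF w _ _ ca(1) ab(3) ca(3)] True ab by auto
      then have "bad (Suc b' + (k - Suc a)) r' c'" using e0 ek d unfolding bad_def by simp
      moreover have "Suc b' + (k - Suc a) < k" using True ab by simp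
      ultimately show False using minb by blast
    next
      case False
      then have "Suc a < b'" using nb by simp
      obtain r' c' where rc: "walk A F (Suc a + (k - b')) r' c'" "r' 0 = r 0" "r' (Suc a + (k - b')) = r k"
        using walk_jump[OF w \<open>Suc a < b'\<close> ab(2) ca(1) ca(2) ab(3)] by auto
      then have "bad (Suc a + (k - b')) r' c'" using e0 ek d unfolding bad_def by simp
      moreover have "Suc a + (k - b') < k" using \<open>Suc a < b'\<close> ab by simp
      ultimately show False using minb by blast
    qed
  qed
  have inj: "inj_on r {0..k}"
  proof (rule inj_onI)
    fix a b' assume ab: "a \<in> {0..k}" "b' \<in> {0..k}" "r a = r b'"
    show "a = b'"
    proof (rule ccontr)
      assume "a \<noteq> b'"
      then consider "a < b'" | "b' < a" by linarith
      then show False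
      proof cases
        case 1
        obtain r' c' where rc: "walk A F (a + (k - b')) r' c'" "r' 0 = r 0" "r' (a + (k - b')) = r k"
          using walk_skip[OF w 1 _ ab(3)] ab by auto
        then have "bad (a + (k - b')) r' c'" using e0 ek d unfolding bad_def by simp
        moreover have "a + (k - b') < k" using 1 ab by auto
        ultimately show False using minb by blast
      next
        case 2
        obtain r' c' where rc: "walk A F (b' + (k - a)) r' c'" "r' 0 = r 0" "r' (b' + (k - a)) = r k"
          using walk_skip[OF w 2 _ ab(3)[symmetric]] ab by auto
        then have "bad (b' + (k - a)) r' c'" using e0 ek d unfolding bad_def by simp
        moreover have "b' + (k - a) < k" using 2 ab by auto
        ultimately show False using minb by blast
      qed
    qed
  qed
  obtain I cc nx s where cyc: "s = 1 \<or> s = -1" "r 0 \<in> I" "r k \<in> I" "r 0 \<noteq> r k" "cc (r 0) = e" "nx (r k) = r 0"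
     "\<forall>x\<in>I. x \<noteq> r 0 \<longrightarrow> cc x \<in> F" "\<forall>x\<in>I. x \<noteq> r k \<longrightarrow> cc (nx x) \<in> F"
     "\<forall>x\<in>I. A x (cc x) \<noteq> 0 \<and> A x (cc (nx x)) \<noteq> 0" "finite I"
     and G: "\<forall>W. (\<forall>x y. A x y = 0 \<longrightarrow> W x y = 0) \<longrightarrow>
           gdet W cc I = (\<Prod>x\<in>I. W x (cc x)) + s * (\<Prod>x\<in>I. W x (cc (nx x)))"
    using cycle_gdet[OF w k inj interior chord e0 ek] by blast
  define P where "P = (\<Prod>x\<in>I. A x (cc x))"
  define Q where "Q = (\<Prod>x\<in>I. A x (cc (nx x)))"
  have gA: "gdet A cc I = P + s * Q" using G unfolding P_def Q_def by blast
  have pat: "\<forall>x y. A x y = 0 \<longrightarrow> Z x y = 0" using absZ by (metis abs_0_eq)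
  have gZ: "gdet Z cc I = (\<Prod>x\<in>I. Z x (cc x)) + s * (\<Prod>x\<in>I. Z x (cc (nx x)))" using G pat by blast
  have PZ: "(\<Prod>x\<in>I. Z x (cc x)) = dl (r 0) * P"
  proof -
    have "(\<Prod>x\<in>I. Z x (cc x)) = Z (r 0) (cc (r 0)) * (\<Prod>x\<in>I - {r 0}. Z x (cc x))"
      by (rule prod.remove[OF cyc(10) cyc(2)])
    also have "(\<Prod>x\<in>I - {r 0}. Z x (cc x)) = (\<Prod>x\<in>I - {r 0}. A x (cc x))"
      using cyc(7) agree by (intro prod.cong) auto
    also have "Z (r 0) (cc (r 0)) = dl (r 0) * A (r 0) (cc (r 0))" using cyc(5) Z_dl by simp
    finally show ?thesis unfolding P_def using prod.remove[OF cyc(10) cyc(2), of "\<lambda>x. A x (cc x)"] by simp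
  qed
  have QZ: "(\<Prod>x\<in>I. Z x (cc (nx x))) = dl (r k) * Q"
  proof -
    have "(\<Prod>x\<in>I. Z x (cc (nx x))) = Z (r k) (cc (nx (r k))) * (\<Prod>x\<in>I - {r k}. Z x (cc (nx x)))"
      by (rule prod.remove[OF cyc(10) cyc(3)])
    also have "(\<Prod>x\<in>I - {r k}. Z x (cc (nx x))) = (\<Prod>x\<in>I - {r k}. A x (cc (nx x)))"
      using cyc(8) agree by (intro prod.cong) auto
    also have "Z (r k) (cc (nx (r k))) = dl (r k) * A (r k) (cc (nx (r k)))" using cyc(5,6) Z_dl by simp
    finally show ?thesis unfolding Q_def using prod.remove[OF cyc(10) cyc(3), of "\<lambda>x. A x (cc (nx x))"] by simp
  qed
  have Pnz: "P \<noteq> 0" unfolding P_def using cyc(9,10) by (simp add: prod_zero_iff)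
  have Qnz: "Q \<noteq> 0" unfolding Q_def using cyc(9,10) by (simp add: prod_zero_iff)
  have dd: "dl (r k) = - dl (r 0)" using d unfolding dl_def by (auto split: if_splits)
  have dsq: "dl (r 0) = 1 \<or> dl (r 0) = -1" unfolding dl_def by auto
  have "\<bar>P + s * Q\<bar> = \<bar>dl (r 0) * P + s * (dl (r k) * Q)\<bar>"
    using H[rule_format, of cc I] gA gZ PZ QZ by simp
  also have "dl (r 0) * P + s * (dl (r k) * Q) = dl (r 0) * (P - s * Q)" using dd by (simp add: algebra_simps)
  also have "\<bar>\<dots>\<bar> = \<bar>P - s * Q\<bar>" using dsq by (auto simp: abs_mult)
  finally have "\<bar>P + s * Q\<bar> = \<bar>P - s * Q\<bar>" .
  then have "P + s * Q = P - s * Q \<or> P + s * Q = - (P - s * Q)" by (auto simp: abs_eq_iff)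
  then show False
  proof
    assume "P + s * Q = P - s * Q"
    then have "s * Q = 0" by simp
    then show False using Qnz cyc(1) by auto
  next
    assume "P + s * Q = - (P - s * Q)"
    then have "P = 0" by simp
    then show False using Pnz by simp
  qed
qed

lemma conn_dl:
  assumes "(adj A F)\<^sup>*\<^sup>* i j" "A i e \<noteq> 0" "A j e \<noteq> 0"
  shows "dl i = dl j"
proof (rule ccontr)
  assume nd: "dl i \<noteq> dl j"
  obtain k r c where "walk A F k r c" "r 0 = i" "r k = j" using conn_walk[OF assms(1)] by blast
  then have ex: "\<exists>k r c. bad k r c" using nd assms unfolding bad_def by blast
  define k0 where "k0 = (LEAST k. \<exists>r c. bad k r c)"
  obtain r0 c0 where b0: "bad k0 r0 c0" using LeastI_ex[OF ex] unfolding k0_def by blast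
  have "\<not> bad k' r' c'" if "k' < k0" for k' r' c'
    using not_less_Least[OF that[unfolded k0_def]] by blast
  then show False using no_min_bad[OF b0] by blast
qed

end

lemma adj_sym: "adj A F i j \<Longrightarrow> adj A F j i" unfolding adj_def by blast

lemma conn_sym:
  assumes "(adj A F)\<^sup>*\<^sup>* i j" shows "(adj A F)\<^sup>*\<^sup>* j i"
  using assms
proof (induction rule: rtranclp_induct)
  case base then show ?case by simp
next
  case (step y z)
  then show ?case using adj_sym converse_rtranclp_into_rtranclp by metis
qed

lemma signing_step:
  fixes A B :: "'d::finite \<Rightarrow> 'n \<Rightarrow> int"
  assumes H: "\<forall>I c. \<bar>gdet A c I\<bar> = \<bar>gdet B c I\<bar>"
    and s: "\<forall>i. s i = 1 \<or> s i = -1" and t: "\<forall>e. t e = 1 \<or> t e = -1"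
    and st: "\<forall>i. \<forall>e'\<in>F. B i e' = s i * t e' * A i e'"
    and eF: "e \<notin> F"
  shows "\<exists>s' t'. (\<forall>i. s' i = 1 \<or> s' i = -1) \<and> (\<forall>e. t' e = 1 \<or> t' e = -1)
    \<and> (\<forall>i. \<forall>e'\<in>insert e F. B i e' = s' i * t' e' * A i e')"
proof -
  define Z where "Z = (\<lambda>x y. s x * t y * B x y)"
  have s2: "s i * s i = 1" for i using s by (metis mult_minus1 mult_1 minus_minus)
  have t2: "t i * t i = 1" for i using t by (metis mult_minus1 mult_1 minus_minus)
  have BZ: "B x y = s x * t y * Z x y" for x y
  proof -
    have "s x * t y * Z x y = (s x * s x) * (t y * t y) * B x y" unfolding Z_def by (simp add: algebra_simps)
    then show ?thesis using s2 t2 by simp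
  qed
  have agree: "\<forall>i. \<forall>e'\<in>F. Z i e' = A i e'"
  proof (intro allI ballI)
    fix i e' assume "e' \<in> F"
    then have "Z i e' = (s i * s i) * (t e' * t e') * A i e'" unfolding Z_def using st by (simp add: algebra_simps)
    then show "Z i e' = A i e'" using s2 t2 by simp
  qed
  have HZ: "\<forall>I c. \<bar>gdet A c I\<bar> = \<bar>gdet Z c I\<bar>"
  proof (intro allI)
    fix I :: "'d set" and c
    have "gdet Z c I = (\<Prod>x\<in>I. s x * t (c x)) * gdet B c I"
      unfolding Z_def by (rule gdet_sign) simp
    then have "\<bar>gdet Z c I\<bar> = \<bar>gdet B c I\<bar>" using abs_prod_signs[OF s t, where I=I and c=c] by (simp add: abs_mult)
    then show "\<bar>gdet A c I\<bar> = \<bar>gdet Z c I\<bar>" using H by simp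
  qed
  let ?dl = "dl A Z e"
  let ?conn = "(adj A F)\<^sup>*\<^sup>*"
  have K: "?dl i = ?dl j" if "?conn i j" "A i e \<noteq> 0" "A j e \<noteq> 0" for i j
    using conn_dl[OF HZ agree that] .
  have Zdl: "Z i e = ?dl i * A i e" for i using Z_dl[OF HZ agree] .
  have dl1: "?dl i = 1 \<or> ?dl i = -1" for i unfolding dl_def[OF HZ agree] by simp
  define R where "R = (\<lambda>i. {r. A r e \<noteq> 0 \<and> ?conn i r})"
  define \<sigma> where "\<sigma> = (\<lambda>i. if R i \<noteq> {} then ?dl (SOME r. r \<in> R i) else 1)"
  have \<sigma>1: "\<sigma> i = 1 \<or> \<sigma> i = -1" for i unfolding \<sigma>_def using dl1 by auto
  have \<sigma>conn: "\<sigma> i = \<sigma> j" if "?conn i j" for i j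
  proof -
    have "R i = R j"
      unfolding R_def using that conn_sym[OF that] by (auto intro: rtranclp_trans)
    then show ?thesis unfolding \<sigma>_def by simp
  qed
  have \<sigma>e: "\<sigma> i = ?dl i" if "A i e \<noteq> 0" for i
  proof -
    have iR: "i \<in> R i" unfolding R_def using that by simp
    then have "(SOME r. r \<in> R i) \<in> R i" by (rule someI)
    then have "?dl (SOME r. r \<in> R i) = ?dl i"
      using K[of i "SOME r. r \<in> R i"] that unfolding R_def by auto
    then show ?thesis unfolding \<sigma>_def using iR by auto
  qed
  define \<tau> where "\<tau> = (\<lambda>e'. if e' \<in> F \<and> (\<exists>i. A i e' \<noteq> 0) then \<sigma> (SOME i. A i e' \<noteq> 0) else 1)"
  have \<tau>1: "\<tau> e' = 1 \<or> \<tau> e' = -1" for e' unfolding \<tau>_def using \<sigma>1 by auto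
  have \<tau>F: "\<sigma> i * \<tau> e' = 1" if "e' \<in> F" "A i e' \<noteq> 0" for i e'
  proof -
    define i0 where "i0 = (SOME i. A i e' \<noteq> 0)"
    have i0: "A i0 e' \<noteq> 0" unfolding i0_def using that(2) by (rule someI)
    have "adj A F i i0" unfolding adj_def using that i0 by blast
    then have "\<sigma> i = \<sigma> i0" using \<sigma>conn by blast
    moreover have "\<tau> e' = \<sigma> i0" unfolding \<tau>_def i0_def using that by auto
    ultimately show ?thesis using \<sigma>1[of i0] by auto
  qed
  have \<tau>e: "\<tau> e = 1" unfolding \<tau>_def using eF by simp
  show ?thesis
  proof (intro exI conjI)
    show "\<forall>i. s i * \<sigma> i = 1 \<or> s i * \<sigma> i = -1"
    proof
      fix i show "s i * \<sigma> i = 1 \<or> s i * \<sigma> i = -1" using s[rule_format, of i] \<sigma>1[of i] by auto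
    qed
    show "\<forall>e. t e * \<tau> e = 1 \<or> t e * \<tau> e = -1"
    proof
      fix e show "t e * \<tau> e = 1 \<or> t e * \<tau> e = -1" using t[rule_format, of e] \<tau>1[of e] by auto
    qed
    show "\<forall>i. \<forall>e'\<in>insert e F. B i e' = s i * \<sigma> i * (t e' * \<tau> e') * A i e'"
    proof (intro allI ballI)
      fix i e' assume e': "e' \<in> insert e F"
      show "B i e' = s i * \<sigma> i * (t e' * \<tau> e') * A i e'"
      proof (cases "A i e' = 0")
        case True
        have "Z i e' = 0" using HZ True absZ[OF HZ agree, of i e'] by simp
        then show ?thesis using True BZ by simp
      next
        case False
        show ?thesis
        proof (cases "e' = e")
          case True
          have "B i e' = s i * t e' * (?dl i * A i e')" using BZ Zdl True by simp
          also have "?dl i = \<sigma> i * \<tau> e'" using \<sigma>e[of i] False True \<tau>e by simp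
          finally show ?thesis by (simp add: algebra_simps)
        next
          case False
          then have "e' \<in> F" using e' by simp
          then have "B i e' = s i * t e' * A i e'" using st by simp
          also have "\<dots> = s i * t e' * (\<sigma> i * \<tau> e') * A i e'" using \<tau>F[OF \<open>e' \<in> F\<close> \<open>A i e' \<noteq> 0\<close>] by simp
          finally show ?thesis by (simp add: algebra_simps)
        qed
      qed
    qed
  qed
qed

theorem signing:
  fixes A B :: "'d::finite \<Rightarrow> 'n::finite \<Rightarrow> int"
  assumes H: "\<forall>I c. \<bar>gdet A c I\<bar> = \<bar>gdet B c I\<bar>"
  shows "\<exists>s t. (\<forall>i. s i = 1 \<or> s i = -1) \<and> (\<forall>e. t e = 1 \<or> t e = -1) \<and> (\<forall>i e. B i e = s i * t e * A i e)"
proof -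
  have "\<exists>s t. (\<forall>i. s i = 1 \<or> s i = -1) \<and> (\<forall>e. t e = 1 \<or> t e = -1) \<and> (\<forall>i. \<forall>e\<in>F. B i e = s i * t e * A i e)"
    if "finite F" for F :: "'n set"
    using that
  proof (induction F rule: finite_induct)
    case empty
    show ?case by (rule exI[of _ "\<lambda>_. 1"], rule exI[of _ "\<lambda>_. 1"]) simp
  next
    case (insert e F)
    then obtain s t where "\<forall>i. s i = 1 \<or> s i = -1" "\<forall>e. t e = 1 \<or> t e = -1" "\<forall>i. \<forall>e\<in>F. B i e = s i * t e * A i e"
      by blast
    then show ?case using signing_step[OF H _ _ _ insert(2)] by blast
  qed
  from this[of UNIV] show ?thesis by auto
qed

lemma right_inv:
  fixes M :: "int^'d^'d"
  assumes "\<bar>det M\<bar> = 1"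
  shows "\<exists>R. M ** R = mat 1"
proof -
  have c1: "card (UNIV // latrel M) = 1" using index_det[of M] assms by simp
  have inl: "v \<in> lat M" for v
  proof -
    obtain X where X: "UNIV // latrel M = {X}" using c1 card_1_singletonE by blast
    have "latrel M `` {v} \<in> UNIV // latrel M" "latrel M `` {0} \<in> UNIV // latrel M"
      by (auto simp: quotient_def)
    then have "latrel M `` {v} = latrel M `` {0}" using X by auto
    then have "(v, 0) \<in> latrel M" using eq_equiv_class_iff[OF equiv_latrel] by blast
    then show ?thesis unfolding latrel_def by simp
  qed
  have "\<forall>j. \<exists>q. M *v q = axis j 1" using inl unfolding lat_def by (metis rangeE)
  then obtain q where q: "\<And>j. M *v q j = axis j 1" by metis
  define R where "R = (\<chi> r c. q c $ r)"
  have "M ** R = mat 1"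
  proof -
    have "(M ** R)$i$c = (M *v q c)$i" for i c
      by (simp add: R_def matrix_matrix_mult_def matrix_vector_mult_def)
    then show ?thesis using q by (simp add: vec_eq_iff mat_def axis_def)
  qed
  then show ?thesis by blast
qed

lemma unimod_inverse:
  fixes P :: "int^'d^'d"
  assumes "\<bar>det P\<bar> = 1"
  shows "\<exists>Q. P ** Q = mat 1 \<and> Q ** P = mat 1 \<and> \<bar>det Q\<bar> = 1"
proof -
  obtain Q where PQ: "P ** Q = mat 1" using right_inv[OF assms] by blast
  have "det P * det Q = 1" using det_mul[of P Q] PQ by simp
  then have "\<bar>det P\<bar> * \<bar>det Q\<bar> = 1" by (metis abs_mult abs_one)
  then have dQ: "\<bar>det Q\<bar> = 1" using assms by simp
  obtain R where QR: "Q ** R = mat 1" using right_inv[OF dQ] by blast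
  have "P = R"
  proof -
    have "P = P ** (Q ** R)" using QR by simp
    also have "\<dots> = (P ** Q) ** R" by (simp add: matrix_mul_assoc)
    finally show ?thesis using PQ by simp
  qed
  then show ?thesis using PQ QR dQ by blast
qed

lemma det_reduce:
  fixes Y :: "int^'n^'d" and f :: "'d \<Rightarrow> 'n" and g :: "'d \<Rightarrow> int"
  assumes Yf: "\<And>i j. Y$i$(f j) = (if i = j then g j else 0)"
  shows "det (colsub Y (\<lambda>x. if x \<in> I then c x else f x)) = (\<Prod>x\<in>-I. g x) * gdet (\<lambda>i e. Y$i$e) c I"
proof -
  let ?h = "\<lambda>x. if x \<in> I then c x else f x"
  let ?t = "\<lambda>p. of_int (sign p) * (\<Prod>x\<in>UNIV. Y$x$(?h (p x)))"
  have "det (colsub Y ?h) = sum ?t {p. p permutes (UNIV::'d set)}"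
    unfolding det_def colsub_def by simp
  also have "\<dots> = sum ?t {p. p permutes I}"
  proof (rule sum.mono_neutral_right)
    show "finite {p. p permutes (UNIV::'d set)}" by (simp add: finite_permutations)
    show "{p. p permutes I} \<subseteq> {p. p permutes UNIV}" by (auto intro: permutes_subset)
    show "\<forall>p\<in>{p. p permutes UNIV} - {p. p permutes I}. ?t p = 0"
    proof
      fix p assume p: "p \<in> {p. p permutes (UNIV::'d set)} - {p. p permutes I}"
      then have pU: "p permutes UNIV" by simp
      have "\<exists>x. x \<notin> I \<and> p x \<noteq> x"
      proof (rule ccontr)
        assume "\<not> ?thesis"
        then have "p permutes I" using pU unfolding permutes_def by blast
        then show False using p by simp
      qed
      then obtain x where x: "x \<notin> I" "p x \<noteq> x" by blast
      define z where "z = inv p x"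
      have pz: "p z = x" unfolding z_def using pU by (simp add: permutes_inverses(1))
      have "z \<noteq> x" using pz x by auto
      then have "Y$z$(?h (p z)) = 0" using pz x Yf by simp
      then have "\<exists>a\<in>UNIV. Y$a$(?h (p a)) = 0" by blast
      then have "(\<Prod>x\<in>UNIV. Y$x$(?h (p x))) = 0" by (intro prod_zero) simp_all
      then show "?t p = 0" by simp
    qed
  qed
  also have "\<dots> = (\<Sum>p\<in>{p. p permutes I}. (\<Prod>x\<in>-I. g x) * (sign p * (\<Prod>x\<in>I. Y$x$(c (p x)))))"
  proof (rule sum.cong)
    fix p assume "p \<in> {p. p permutes I}"
    then have p: "p permutes I" by simp
    have "(\<Prod>x\<in>UNIV. Y$x$(?h (p x))) = (\<Prod>x\<in>UNIV \<inter> I. Y$x$(?h (p x))) * (\<Prod>x\<in>UNIV - I. Y$x$(?h (p x)))"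
      by (rule prod.Int_Diff) simp
    also have "(\<Prod>x\<in>UNIV \<inter> I. Y$x$(?h (p x))) = (\<Prod>x\<in>I. Y$x$(c (p x)))"
      using p by (intro prod.cong) (auto simp: permutes_in_image)
    also have "(\<Prod>x\<in>UNIV - I. Y$x$(?h (p x))) = (\<Prod>x\<in>-I. g x)"
      using p Yf by (intro prod.cong) (auto simp: permutes_not_in Compl_eq_Diff_UNIV)
    finally show "?t p = (\<Prod>x\<in>-I. g x) * (sign p * (\<Prod>x\<in>I. Y$x$(c (p x))))" by simp
  qed simp
  also have "\<dots> = (\<Prod>x\<in>-I. g x) * gdet (\<lambda>i e. Y$i$e) c I"
    unfolding gdet_def by (simp add: sum_distrib_left)
  finally show ?thesis .
qed

lemma normal_form:
  fixes X :: "int^'n^'d" and f :: "'d \<Rightarrow> 'n" and g :: "'d \<Rightarrow> int"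
  assumes dX: "det (colsub X f) \<noteq> 0" and gj: "\<And>j. gcdv (column (f j) X) = g j"
    and prodg: "nat \<bar>det (colsub X f)\<bar> = (\<Prod>j\<in>UNIV. nat (g j))"
  shows "\<exists>P. \<bar>det P\<bar> = 1 \<and> (\<forall>i j. X$i$(f j) = g j * P$i$j)"
proof -
  have cnz: "column (f j) X \<noteq> 0" for j
  proof
    assume "column (f j) X = 0"
    then have "column j (colsub X f) = 0" by (simp add: column_def colsub_def vec_eq_iff)
    then show False using dX det_zero_column(1)[of j "colsub X f"] by simp
  qed
  have gp: "g j > 0" for j using gcdv_props(1)[OF cnz[of j]] gj by simp
  have dv: "g j dvd X$i$(f j)" for i j
    using gj[of j] unfolding gcdv_def column_def by (metis Gcd_dvd rangeI vec_lambda_beta)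
  define P where "P = (\<chi> i j. X$i$(f j) div g j)"
  have XP: "X$i$(f j) = g j * P$i$j" for i j using dv by (simp add: P_def)
  define Dg where "Dg = (\<chi> i j. if i = j then g j else (0::int))"
  have "colsub X f = P ** Dg"
  proof -
    have "(P ** Dg)$i$j = P$i$j * g j" for i j
    proof -
      have "(P ** Dg)$i$j = (\<Sum>k\<in>UNIV. P$i$k * Dg$k$j)" by (simp add: matrix_matrix_mult_def)
      also have "\<dots> = P$i$j * Dg$j$j" by (rule sum_single) (auto simp: Dg_def)
      finally show ?thesis by (simp add: Dg_def)
    qed
    then show ?thesis by (simp add: vec_eq_iff colsub_def XP mult.commute)
  qed
  then have "det (colsub X f) = det P * (\<Prod>j\<in>UNIV. g j)"
    using det_mul[of P Dg] det_diagonal[of Dg] by (simp add: Dg_def)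
  moreover have G: "int (\<Prod>j\<in>UNIV. nat (g j)) = (\<Prod>j\<in>UNIV. g j)"
    using gp by (simp add: of_nat_prod order.strict_implies_order)
  moreover have Gp: "(\<Prod>j\<in>UNIV. g j) > 0" using gp by (simp add: prod_pos)
  ultimately have dd: "det (colsub X f) = det P * (\<Prod>j\<in>UNIV. g j)" by simp
  have "nat \<bar>det (colsub X f)\<bar> = nat (\<Prod>j\<in>UNIV. g j)" using prodg G by (metis nat_int)
  then have "\<bar>det (colsub X f)\<bar> = (\<Prod>j\<in>UNIV. g j)" using Gp by (simp add: eq_nat_nat_iff)
  then have "\<bar>det P\<bar> * (\<Prod>j\<in>UNIV. g j) = (\<Prod>j\<in>UNIV. g j)" using dd Gp by (simp add: abs_mult)
  moreover obtain GG where GG: "GG = (\<Prod>j\<in>UNIV. g j)" by blast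
  ultimately have "\<bar>det P\<bar> * GG = GG" "GG > 0" using Gp by auto
  then have "\<bar>det P\<bar> = 1" by simp
  then show ?thesis using XP by blast
qed

lemma colsub_mult: "colsub (Q ** X) h = Q ** colsub X h"
  by (simp add: colsub_def matrix_matrix_mult_def vec_eq_iff)

lemma diag_mult_left:
  fixes Y :: "int^'n^'d"
  shows "((\<chi> i j. if i = j then s i else 0) ** Y)$i$e = s i * Y$i$e"
proof -
  have "((\<chi> i j. if i = j then s i else 0) ** Y)$i$e = (\<Sum>k\<in>UNIV. (if i = k then s i else 0) * Y$k$e)"
    by (simp add: matrix_matrix_mult_def)
  also have "\<dots> = (if i = i then s i else 0) * Y$i$e" by (rule sum_single) auto
  finally show ?thesis by simp
qed

lemma diag_mult_right:
  fixes Y :: "int^'n^'d"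
  shows "(Y ** (\<chi> i j. if i = j then t i else 0))$i$e = Y$i$e * t e"
proof -
  have "(Y ** (\<chi> i j. if i = j then t i else 0))$i$e = (\<Sum>k\<in>UNIV. Y$i$k * (if k = e then t k else 0))"
    by (simp add: matrix_matrix_mult_def)
  also have "\<dots> = Y$i$e * (if e = e then t e else 0)" by (rule sum_single) auto
  finally show ?thesis by simp
qed

lemma normalize:
  fixes X :: "int^'n^'d" and f :: "'d \<Rightarrow> 'n" and g :: "'d \<Rightarrow> int"
  assumes dX: "det (colsub X f) \<noteq> 0" and gj: "\<And>j. gcdv (column (f j) X) = g j"
    and prodg: "nat \<bar>det (colsub X f)\<bar> = (\<Prod>j\<in>UNIV. nat (g j))"
  shows "\<exists>P Q. P ** Q = mat 1 \<and> Q ** P = mat 1 \<and> \<bar>det Q\<bar> = 1 \<and>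
     (\<forall>i j. (Q ** X)$i$(f j) = (if i = j then g j else 0))"
proof -
  obtain P where P: "\<bar>det P\<bar> = 1" "\<forall>i j. X$i$(f j) = g j * P$i$j"
    using normal_form[OF dX gj prodg] by blast
  obtain Q where Q: "P ** Q = mat 1" "Q ** P = mat 1" "\<bar>det Q\<bar> = 1" using unimod_inverse[OF P(1)] by blast
  have "(Q ** X)$i$(f j) = (if i = j then g j else 0)" for i j
  proof -
    have "(Q ** X)$i$(f j) = (\<Sum>k\<in>UNIV. Q$i$k * (g j * P$k$j))"
      using P(2) by (simp add: matrix_matrix_mult_def)
    also have "\<dots> = g j * (Q ** P)$i$j"
      by (simp add: matrix_matrix_mult_def sum_distrib_left algebra_simps)
    finally show ?thesis using Q(2) by (simp add: mat_def)
  qed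
  then show ?thesis using Q by blast
qed

theorem theorem1p1:
  fixes X X' :: "int^'n^'d"
  assumes "CARD('d) \<le> CARD('n)"
    and "am_rank X UNIV = CARD('d)"
    and "am_rank X' UNIV = CARD('d)"
    and "same_arith_matroid X X'"
    and "weakly_multiplicative X"
  shows "\<exists>(T :: int^'d^'d) (D :: int^'n^'n).
           invertible T
         \<and> (\<forall>i j. i \<noteq> j \<longrightarrow> D $ i $ j = 0)
         \<and> (\<forall>i. D $ i $ i = 1 \<or> D $ i $ i = -1)
         \<and> X' = T ** X ** D"
proof -
  note same = assms(4)[unfolded same_arith_matroid_def]
  obtain B where mb: "multiplicative_basis X B"
    using assms(5) unfolding weakly_multiplicative_def by blast
  then have rB: "am_rank X B = card B" "am_rank X B = CARD('d)" and mB: "am_mult X B = (\<Prod>x\<in>B. am_mult X {x})"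
    using assms(2) unfolding multiplicative_basis_def am_basis_def by auto
  then have "card (UNIV :: 'd set) = card B" by simp
  then obtain f :: "'d \<Rightarrow> 'n" where f: "bij_betw f UNIV B"
    using finite_same_card_bij[of "UNIV :: 'd set" B] by auto
  have rf: "range f = B" and injf: "inj f" using f by (auto simp: bij_betw_def)
  have dX: "det (colsub X f) \<noteq> 0" using am_rank_full_iff[of X f] rB rf by simp
  have dX': "det (colsub X' f) \<noteq> 0" using am_rank_full_iff[of X' f] rB rf same by simp
  have colnz: "column (f j) Y \<noteq> 0" if "det (colsub Y f) \<noteq> 0" for Y :: "int^'n^'d" and j
  proof
    assume "column (f j) Y = 0"
    then have "column j (colsub Y f) = 0" by (simp add: column_def colsub_def vec_eq_iff)
    then show False using that det_zero_column(1)[of j "colsub Y f"] by simp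
  qed
  define g where "g = (\<lambda>j. gcdv (column (f j) X))"
  have mX: "am_mult X {f j} = nat (g j)" for j using am_mult_single[OF colnz[OF dX]] unfolding g_def .
  have gp: "g j > 0" for j unfolding g_def using gcdv_props(1)[OF colnz[OF dX]] .
  have g': "gcdv (column (f j) X') = g j" for j
  proof -
    have "nat (gcdv (column (f j) X')) = nat (g j)"
      using am_mult_single[OF colnz[OF dX'], of j] mX[of j] same by metis
    moreover have "gcdv (column (f j) X') > 0" using gcdv_props(1)[OF colnz[OF dX']] .
    ultimately show ?thesis using gp[of j] by simp
  qed
  have prodB: "(\<Prod>x\<in>B. am_mult Y {x}) = (\<Prod>j\<in>UNIV. am_mult Y {f j})" for Y :: "int^'n^'d"
    using prod.reindex_bij_betw[OF f, of "\<lambda>x. am_mult Y {x}"] by simp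
  have pX: "nat \<bar>det (colsub X f)\<bar> = (\<Prod>j\<in>UNIV. nat (g j))"
    using am_mult_colsub[OF injf dX] mB prodB[of X] mX rf by simp
  have pX': "nat \<bar>det (colsub X' f)\<bar> = (\<Prod>j\<in>UNIV. nat (g j))"
    using same_absdet[OF assms(4), of f] pX by simp
  obtain P Q where PQ: "P ** Q = mat 1" "Q ** P = mat 1" "\<bar>det Q\<bar> = 1"
      and Yf: "\<forall>i j. (Q ** X)$i$(f j) = (if i = j then g j else 0)"
    using normalize[OF dX _ pX] g_def by blast
  obtain P' Q' where PQ': "P' ** Q' = mat 1" "Q' ** P' = mat 1" "\<bar>det Q'\<bar> = 1"
      and Yf': "\<forall>i j. (Q' ** X')$i$(f j) = (if i = j then g j else 0)"
    using normalize[OF dX' g' pX'] by blast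
  define Y where "Y = Q ** X"
  define Y' where "Y' = Q' ** X'"
  have absY: "\<bar>det (colsub Y h)\<bar> = \<bar>det (colsub Y' h)\<bar>" for h
  proof -
    have "\<bar>det (colsub Y h)\<bar> = \<bar>det (colsub X h)\<bar>"
      unfolding Y_def colsub_mult det_mul using PQ(3) by (simp add: abs_mult)
    moreover have "\<bar>det (colsub Y' h)\<bar> = \<bar>det (colsub X' h)\<bar>"
      unfolding Y'_def colsub_mult det_mul using PQ'(3) by (simp add: abs_mult)
    ultimately show ?thesis using same_absdet[OF assms(4), of h] by simp
  qed
  have H: "\<forall>I c. \<bar>gdet (\<lambda>i e. Y$i$e) c I\<bar> = \<bar>gdet (\<lambda>i e. Y'$i$e) c I\<bar>"
  proof (intro allI)
    fix I :: "'d set" and c :: "'d \<Rightarrow> 'n"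
    have Gnz: "(\<Prod>x\<in>-I. g x) \<noteq> 0" using gp by (simp add: prod_zero_iff) (metis less_irrefl)
    have r1: "det (colsub Y (\<lambda>x. if x \<in> I then c x else f x)) = (\<Prod>x\<in>-I. g x) * gdet (\<lambda>i e. Y$i$e) c I"
      by (rule det_reduce) (use Yf Y_def in simp)
    have r2: "det (colsub Y' (\<lambda>x. if x \<in> I then c x else f x)) = (\<Prod>x\<in>-I. g x) * gdet (\<lambda>i e. Y'$i$e) c I"
      by (rule det_reduce) (use Yf' Y'_def in simp)
    show "\<bar>gdet (\<lambda>i e. Y$i$e) c I\<bar> = \<bar>gdet (\<lambda>i e. Y'$i$e) c I\<bar>"
      using absY[of "\<lambda>x. if x \<in> I then c x else f x"] r1 r2 Gnz by (simp add: abs_mult)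
  qed
  obtain s t where st: "\<forall>i. s i = 1 \<or> s i = -1" "\<forall>e. t e = 1 \<or> t e = -1"
      "\<forall>i e. Y'$i$e = s i * t e * Y$i$e"
    using signing[OF H] by blast
  define S :: "int^'d^'d" where "S = (\<chi> i j. if i = j then s i else 0)"
  define D :: "int^'n^'n" where "D = (\<chi> i j. if i = j then t i else 0)"
  have YSD: "Y' = S ** Y ** D"
    unfolding S_def D_def by (simp add: vec_eq_iff diag_mult_right diag_mult_left st(3) mult.commute mult.left_commute)
  have SS: "S ** S = mat 1"
  proof -
    have "(S ** S)$i$j = (if i = j then 1 else 0)" for i j
    proof -
      have "(S ** S)$i$j = s i * S$i$j" unfolding S_def by (rule diag_mult_left)
      then show ?thesis using st(1) unfolding S_def by (auto simp: algebra_simps) (metis mult_minus1 minus_minus mult_1)+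
    qed
    then show ?thesis by (simp add: vec_eq_iff mat_def)
  qed
  have X'eq: "X' = (P' ** S ** Q) ** X ** D"
  proof -
    have "X' = (P' ** Q') ** X'" using PQ'(1) by simp
    also have "\<dots> = P' ** Y'" unfolding Y'_def by (simp add: matrix_mul_assoc)
    also have "\<dots> = P' ** (S ** (Q ** X) ** D)" using YSD unfolding Y_def by simp
    also have "\<dots> = (P' ** S ** Q) ** X ** D" by (simp add: matrix_mul_assoc)
    finally show ?thesis .
  qed
  have invT: "invertible (P' ** S ** Q)"
  proof -
    have "invertible P'" unfolding invertible_def using PQ' by blast
    moreover have "invertible S" unfolding invertible_def using SS by blast
    moreover have "invertible Q" unfolding invertible_def using PQ by blast
    ultimately show ?thesis by (intro invertible_mult)
  qed
  show ?thesis
  proof (intro exI conjI)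
    show "invertible (P' ** S ** Q)" by (rule invT)
    show "\<forall>i j. i \<noteq> j \<longrightarrow> D $ i $ j = 0" unfolding D_def by simp
    show "\<forall>i. D $ i $ i = 1 \<or> D $ i $ i = -1" unfolding D_def using st(2) by simp
    show "X' = P' ** S ** Q ** X ** D" by (rule X'eq)
  qed
qed

end
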